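(* For $n=4$ agents, $\hat r_4=r_4=\frac{13}{9}$, whereas $\rho_4\ge\frac{10}{7}$.
   Context: Equal responsibilities; chores $e_1,\ldots,e_m$. A picking order $S\in[n]^m$ allocates $A_i(S)=\{e_r:S_r=i\}$ to agent $i$ (equivalently, agents following greedy in the reversed picking sequence on an identically ordered instance). For additive $c_i\ge0$ with $c_i(e_1)\ge c_i(e_2)\ge\cdots$: $CS_i=\max\{\frac1nc_i(\{e_1,\ldots,e_m\}),c_i(e_1),c_i(e_n)+c_i(e_{n+1})\}$ (zeros beyond $m$) and $MMS_i=\min_{(A_1,\ldots,A_n)}\max_jc_i(A_j)$. $r_{n,m}(S)=\sup_i\sup_{c_i}c_i(A_i(S))/CS_i$, $\rho_{n,m}(S)=\sup_i\sup_{c_i}c_i(A_i(S))/MMS_i$. $r_{n,m}=\min_S r_{n,m}(S)$ and $\rho_{n,m}=\min_S\rho_{n,m}(S)$ over all picking orders of length $m$; $\hat r_{n,m}$ is the minimum of $r_{n,m}(S)$ over ridge picking orders only ($S_r=r$, $S_{n+r}=n-r+1$ for $1\le r\le n$, $m\ge2n$). $r_n=\sup_m r_{n,m}$, $\rho_n=\sup_m\rho_{n,m}$, $\hat r_n=\sup_{m\ge2n}\hat r_{n,m}$. *)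

theory Defs
  imports Complex_Main "HOL-Library.Extended_Real"
begin

text \<open>Agents are 1..n, chores are e_1..e_m (indexed 1..m).
 A picking order / assignment of chores to agents is a list S of length m
 with entries in {1..n}; chore e_r goes to agent S!(r-1).\<close>

definition picking_orders :: "nat \<Rightarrow> nat \<Rightarrow> nat list set" where
  "picking_orders n m = {S. length S = m \<and> set S \<subseteq> {1..n}}"

definition pick :: "nat list \<Rightarrow> nat \<Rightarrow> nat" where
  "pick S r = S ! (r - 1)"

definition alloc_bundle :: "nat list \<Rightarrow> nat \<Rightarrow> nat set" where
  "alloc_bundle S i = {r \<in> {1..length S}. pick S r = i}"

definition ridge_orders :: "nat \<Rightarrow> nat \<Rightarrow> nat list set" where
  "ridge_orders n m = {S \<in> picking_orders n m.
      \<forall>r\<in>{1..n}. pick S r = r \<and> pick S (n + r) = n - r + 1}"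

text \<open>Additive, nonnegative, identically ordered cost functions on chores
  e_1..e_m: c(e_1) \<ge> c(e_2) \<ge> ...; values outside 1..m are fixed to 0
  (the zeros-beyond-m convention).\<close>
definition costs :: "nat \<Rightarrow> (nat \<Rightarrow> real) set" where
  "costs m = {c. (\<forall>r\<in>{1..m}. 0 \<le> c r)
               \<and> (\<forall>r\<in>{1..m}. \<forall>s\<in>{1..m}. r \<le> s \<longrightarrow> c s \<le> c r)
               \<and> (\<forall>r. r \<notin> {1..m} \<longrightarrow> c r = 0)}"

definition CS :: "nat \<Rightarrow> nat \<Rightarrow> (nat \<Rightarrow> real) \<Rightarrow> real" where
  "CS n m c = max ((\<Sum>r\<in>{1..m}. c r) / real n) (max (c 1) (c n + c (n + 1)))"

definition MMS :: "nat \<Rightarrow> nat \<Rightarrow> (nat \<Rightarrow> real) \<Rightarrow> real" where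
  "MMS n m c = Min ((\<lambda>P. Max ((\<lambda>j. \<Sum>r\<in>alloc_bundle P j. c r) ` {1..n})) ` picking_orders n m)"

definition r_S :: "nat \<Rightarrow> nat \<Rightarrow> nat list \<Rightarrow> ereal" where
  "r_S n m S = (SUP i\<in>{1..n}. SUP c\<in>costs m. ereal ((\<Sum>r\<in>alloc_bundle S i. c r) / CS n m c))"

definition rho_S :: "nat \<Rightarrow> nat \<Rightarrow> nat list \<Rightarrow> ereal" where
  "rho_S n m S = (SUP i\<in>{1..n}. SUP c\<in>costs m. ereal ((\<Sum>r\<in>alloc_bundle S i. c r) / MMS n m c))"

definition r_nm :: "nat \<Rightarrow> nat \<Rightarrow> ereal" where
  "r_nm n m = (INF S\<in>picking_orders n m. r_S n m S)"

definition rho_nm :: "nat \<Rightarrow> nat \<Rightarrow> ereal" where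
  "rho_nm n m = (INF S\<in>picking_orders n m. rho_S n m S)"

definition r_hat_nm :: "nat \<Rightarrow> nat \<Rightarrow> ereal" where
  "r_hat_nm n m = (INF S\<in>ridge_orders n m. r_S n m S)"

definition r_n :: "nat \<Rightarrow> ereal" where
  "r_n n = (SUP m. r_nm n m)"

definition rho_n :: "nat \<Rightarrow> ereal" where
  "rho_n n = (SUP m. rho_nm n m)"

definition r_hat_n :: "nat \<Rightarrow> ereal" where
  "r_hat_n n = (SUP m\<in>{2*n..}. r_hat_nm n m)"

end

theory Submission
  imports Defs
begin

datatype ct = Lf nat | Nd ct ct ct ct

definition sA :: "nat list \<Rightarrow> nat \<Rightarrow> nat list \<Rightarrow> nat" where
  "sA p i cl = sum_list (map (\<lambda>(x, c). if x = i then c else 0) (zip p cl))"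

definition nth0 :: "nat list \<Rightarrow> nat \<Rightarrow> nat" where
  "nth0 cl j = (if j < length cl then cl!j else 0)"

definition validCS :: "nat list \<times> nat \<Rightarrow> bool" where
  "validCS ck = (fst ck \<noteq> [] \<and> 0 < hd (fst ck) \<and> sorted_wrt (\<lambda>a b. b \<le> a) (fst ck)
     \<and> 13 * sum_list (fst ck) \<le> snd ck \<and> 52 * hd (fst ck) \<le> snd ck
     \<and> 52 * (nth0 (fst ck) 3 + nth0 (fst ck) 4) \<le> snd ck)"

definition leafCS :: "nat list \<Rightarrow> nat list \<times> nat \<Rightarrow> bool" where
  "leafCS p ck = (length (fst ck) \<le> length p \<and> snd ck \<le> 36 * sA p (last p) (fst ck))"

definition validR :: "nat list \<times> nat list \<times> nat \<Rightarrow> bool" where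
  "validR cq = (case cq of (cl, Q, B) \<Rightarrow> cl \<noteq> [] \<and> 0 < hd cl \<and> sorted_wrt (\<lambda>a b. b \<le> a) cl
     \<and> length cl \<le> 14 \<and> length Q = 14 \<and> list_all (\<lambda>x. 1 \<le> x \<and> x \<le> 4) Q
     \<and> list_all (\<lambda>j. sA Q j cl \<le> B) [1,2,3,4])"

definition leafR :: "nat list \<Rightarrow> nat list \<times> nat list \<times> nat \<Rightarrow> bool" where
  "leafR p cq = (case cq of (cl, Q, B) \<Rightarrow> length cl \<le> length p \<and> 10 * B \<le> 7 * sA p (last p) cl)"

fun chk :: "(nat list \<Rightarrow> 'c \<Rightarrow> bool) \<Rightarrow> 'c list \<Rightarrow> nat \<Rightarrow> ct \<Rightarrow> nat list \<Rightarrow> bool" where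
  "chk lf cs d (Lf j) p = (p \<noteq> [] \<and> j < length cs \<and> lf p (cs ! j))"
| "chk lf cs 0 (Nd t1 t2 t3 t4) p = False"
| "chk lf cs (Suc d) (Nd t1 t2 t3 t4) p = (chk lf cs d t1 (p@[1]) \<and> chk lf cs d t2 (p@[2]) \<and> chk lf cs d t3 (p@[3]) \<and> chk lf cs d t4 (p@[4]))"

definition certsCS :: "(nat list \<times> nat) list" where
  "certsCS = [([1, 1], 52),
   ([1, 1, 1], 52),
   ([1, 1, 1, 1], 52),
   ([2, 1, 1, 1, 1], 104),
   ([2, 2, 1, 1, 1], 104),
   ([2, 2, 2, 1, 1], 104),
   ([2, 1, 1, 1, 1, 1], 104),
   ([2, 2, 1, 1, 1, 1], 104),
   ([2, 1, 1, 1, 1, 1, 1], 104),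
   ([8, 3, 3, 3, 3, 3, 3, 3, 3], 416),
   ([7, 7, 2, 2, 2, 2, 2, 2, 2], 364),
   ([3, 1, 1, 1, 1, 1, 1, 1, 1, 1], 156),
   ([4, 4, 1, 1, 1, 1, 1, 1, 1, 1], 208),
   ([2, 2, 2, 2, 2, 2, 2, 2, 2, 2], 260),
   ([10, 3, 3, 3, 3, 3, 3, 3, 3, 3, 3], 520),
   ([9, 9, 2, 2, 2, 2, 2, 2, 2, 2, 2], 468),
   ([4, 4, 4, 4, 4, 4, 4, 4, 4, 4, 4], 572),
   ([3, 3, 1, 1, 1, 1, 1, 1], 156),
   ([1, 1, 1, 1, 1, 1, 1, 1], 104)]"

definition certsR :: "(nat list \<times> nat list \<times> nat) list" where
  "certsR = [([9, 9], [1, 2, 1, 1, 1, 1, 1, 1, 1, 1, 1, 1, 1, 1], 9),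
   ([9, 9, 9], [1, 2, 3, 1, 1, 1, 1, 1, 1, 1, 1, 1, 1, 1], 9),
   ([9, 9, 9, 9], [1, 2, 3, 4, 1, 1, 1, 1, 1, 1, 1, 1, 1, 1], 9),
   ([9, 4, 4, 4, 4], [1, 2, 2, 3, 3, 1, 1, 1, 1, 1, 1, 1, 1, 1], 9),
   ([9, 9, 4, 4, 4], [1, 2, 3, 3, 4, 1, 1, 1, 1, 1, 1, 1, 1, 1], 9),
   ([9, 9, 9, 4, 4], [1, 2, 3, 4, 4, 1, 1, 1, 1, 1, 1, 1, 1, 1], 9),
   ([9, 4, 4, 4, 4, 4], [1, 2, 2, 3, 3, 4, 1, 1, 1, 1, 1, 1, 1, 1], 9),
   ([9, 9, 4, 4, 4, 4], [1, 2, 3, 3, 4, 4, 1, 1, 1, 1, 1, 1, 1, 1], 9),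
   ([9, 4, 4, 4, 4, 4, 4], [1, 2, 2, 3, 3, 4, 4, 1, 1, 1, 1, 1, 1, 1], 9),
   ([9, 3, 3, 3, 3, 3, 3, 3, 3], [1, 2, 2, 2, 3, 3, 3, 4, 4, 1, 1, 1, 1, 1], 9),
   ([9, 9, 2, 2, 2, 2, 2, 2, 2], [1, 2, 3, 3, 3, 3, 4, 4, 4, 1, 1, 1, 1, 1], 9),
   ([9, 3, 3, 3, 3, 3, 3, 3, 3, 3], [1, 2, 2, 2, 3, 3, 3, 4, 4, 4, 1, 1, 1, 1], 9),
   ([9, 9, 2, 2, 2, 2, 2, 2, 2, 2], [1, 2, 3, 3, 3, 3, 4, 4, 4, 4, 1, 1, 1, 1], 9),
   ([9, 9, 9, 7, 7, 7, 7, 7, 7, 7], [1, 1, 2, 2, 3, 3, 3, 4, 4, 4, 1, 1, 1, 1], 21),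
   ([9, 2, 2, 2, 2, 2, 2, 2, 2, 2, 2], [1, 2, 2, 2, 2, 3, 3, 3, 3, 4, 4, 1, 1, 1], 9),
   ([7, 7, 2, 2, 2, 2, 2, 1, 1, 1, 1], [1, 2, 3, 3, 3, 4, 4, 3, 4, 4, 4, 1, 1, 1], 7),
   ([9, 2, 2, 2, 2, 2, 2, 2, 2, 2, 2, 2], [1, 2, 2, 2, 2, 3, 3, 3, 3, 4, 4, 4, 1, 1], 9),
   ([9, 2, 2, 2, 2, 2, 2, 2, 2, 2, 2, 2, 2], [1, 2, 2, 2, 2, 3, 3, 3, 3, 4, 4, 4, 4, 1], 9),
   ([7, 7, 1, 1, 1, 1, 1, 1, 1, 1, 1, 1, 1], [1, 2, 3, 3, 3, 3, 3, 3, 3, 4, 4, 4, 4, 1], 7),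
   ([9, 9, 9, 9, 9, 9, 9, 9, 9, 7, 7, 7, 7], [1, 1, 1, 2, 2, 2, 3, 3, 3, 4, 4, 4, 4, 1], 28),
   ([9, 3, 3, 3, 3, 3, 3, 3, 1, 1, 1, 1, 1, 1], [1, 2, 2, 2, 3, 3, 3, 4, 4, 4, 4, 4, 4, 4], 9),
   ([7, 7, 1, 1, 1, 1, 1, 1, 1, 1, 1, 1, 1, 1], [1, 2, 3, 3, 3, 3, 3, 3, 3, 4, 4, 4, 4, 4], 7),
   ([9, 9, 9, 9, 9, 9, 9, 9, 9, 9, 9, 3, 3, 3], [1, 1, 1, 2, 2, 2, 3, 3, 3, 4, 4, 4, 4, 4], 27),
   ([9, 9, 9, 9, 9, 4, 4, 4, 4, 4, 4, 4, 4, 4], [1, 1, 2, 3, 4, 2, 2, 2, 3, 3, 3, 4, 4, 4], 21),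
   ([9, 9, 9, 9, 9, 9, 9, 9, 9, 9, 9, 9], [1, 1, 1, 2, 2, 2, 3, 3, 3, 4, 4, 4, 1, 1], 27),
   ([9, 9, 9, 9, 9, 6, 6, 6, 6, 6, 6, 6, 6], [1, 1, 2, 2, 3, 1, 2, 3, 3, 4, 4, 4, 4, 1], 24),
   ([9, 9, 9, 9, 9, 6, 6, 6, 6, 6, 6], [1, 1, 2, 3, 4, 2, 2, 3, 3, 4, 4, 1, 1, 1], 21),
   ([9, 9, 9, 9, 9, 9, 6, 6, 6, 6, 6, 6, 6], [1, 1, 2, 2, 3, 3, 1, 2, 3, 4, 4, 4, 4, 1], 24),
   ([9, 9, 9, 9, 7, 7, 7, 7, 7, 7], [1, 1, 2, 2, 3, 3, 3, 4, 4, 4, 1, 1, 1, 1], 21),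
   ([9, 9, 9, 9, 9, 9, 9, 9], [1, 1, 2, 2, 3, 3, 4, 4, 1, 1, 1, 1, 1, 1], 18),
   ([9, 9, 9, 9, 9, 9, 9], [1, 1, 2, 2, 3, 3, 4, 1, 1, 1, 1, 1, 1, 1], 18),
   ([9, 9, 9, 9, 9, 9], [1, 1, 2, 2, 3, 3, 1, 1, 1, 1, 1, 1, 1, 1], 18)]"

definition treeCS :: ct where
  "treeCS = Nd (Nd (Lf 0) (Nd (Lf 1) (Lf 1) (Nd (Lf 2) (Lf 2) (Lf 2) (Nd (Lf 3) (Lf 4) (Lf 5) (Nd (Lf 6) (Lf 7) (Nd (Lf 8) (Nd (Nd (Lf 9) (Lf 10) (Nd (Lf 11) (Lf 12) (Lf 13) (Nd (Lf 14) (Lf 15) (Lf 16) (Lf 16))) (Nd (Lf 11) (Lf 12) (Nd (Lf 14) (Lf 15) (Lf 16) (Lf 16)) (Lf 13))) (Lf 17) (Lf 18) (Lf 18)) (Lf 8) (Lf 8)) (Lf 6)))) (Nd (Lf 2) (Lf 2) (Nd (Lf 3) (Lf 4) (Nd (Lf 6) (Lf 7) (Lf 6) (Nd (Lf 8) (Nd (Nd (Lf 9) (Lf 10) (Nd (Lf 11) (Lf 12) (Lf 13) (Nd (Lf 14) (Lf 15) (Lf 16) (Lf 16))) (Nd (Lf 11) (Lf 12) (Nd (Lf 14) (Lf 15) (Lf 16) (Lf 16)) (Lf 13))) (Lf 17) (Lf 18) (Lf 18)) (Lf 8) (Lf 8))) (Lf 5)) (Lf 2))) (Nd (Lf 1)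 (Nd (Lf 2) (Lf 2) (Lf 2) (Nd (Lf 3) (Lf 5) (Lf 4) (Nd (Lf 6) (Nd (Lf 8) (Lf 8) (Nd (Nd (Lf 9) (Nd (Lf 11) (Lf 13) (Lf 12) (Nd (Lf 14) (Lf 16) (Lf 15) (Lf 16))) (Lf 10) (Nd (Lf 11) (Nd (Lf 14) (Lf 16) (Lf 15) (Lf 16)) (Lf 12) (Lf 13))) (Lf 18) (Lf 17) (Lf 18)) (Lf 8)) (Lf 7) (Lf 6)))) (Lf 1) (Nd (Lf 2) (Nd (Lf 3) (Nd (Lf 6) (Lf 6) (Lf 7) (Nd (Lf 8) (Lf 8) (Nd (Nd (Lf 9) (Nd (Lf 11) (Lf 13) (Lf 12) (Nd (Lf 14) (Lf 16) (Lf 15) (Lf 16))) (Lf 10) (Nd (Lf 11) (Nd (Lf 14) (Lf 16) (Lf 15) (Lf 16)) (Lf 12) (Lf 13))) (Lf 18) (Lf 17) (Lf 18)) (Lf 8))) (Lf 4) (Lf 5)) (Lf 2) (Lf 2))) (Nd (Lf 1) (Nd (Lf 2) (Lf 2) (Nd (Lf 3) (Lf 5) (Nd (Lf 6) (Nd (Lf 8) (Lf 8) (Lf 8) (Nd (Nd (Lf 9) (Nd (Lf 11) (Lf 13) (Nd (Lf 14) (Lf 16) (Lf 16) (Lf 15)) (Lf 12)) (Nd (Lf 11) (Nd (Lf 14) (Lf 16) (Lf 16) (Lf 15)) (Lf 13) (Lf 12)) (Lf 10)) (Lf 18) (Lf 18) (Lf 17))) (Lf 6) (Lf 7)) (Lf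 4)) (Lf 2)) (Nd (Lf 2) (Nd (Lf 3) (Nd (Lf 6) (Lf 6) (Nd (Lf 8) (Lf 8) (Lf 8) (Nd (Nd (Lf 9) (Nd (Lf 11) (Lf 13) (Nd (Lf 14) (Lf 16) (Lf 16) (Lf 15)) (Lf 12)) (Nd (Lf 11) (Nd (Lf 14) (Lf 16) (Lf 16) (Lf 15)) (Lf 13) (Lf 12)) (Lf 10)) (Lf 18) (Lf 18) (Lf 17))) (Lf 7)) (Lf 5) (Lf 4)) (Lf 2) (Lf 2)) (Lf 1))) (Nd (Nd (Lf 1) (Lf 1) (Nd (Lf 2) (Lf 2) (Lf 2) (Nd (Lf 4) (Lf 3) (Lf 5) (Nd (Lf 7) (Lf 6) (Nd (Nd (Lf 17) (Nd (Lf 10) (Lf 9) (Nd (Lf 12) (Lf 11) (Lf 13) (Nd (Lf 15) (Lf 14) (Lf 16) (Lf 16))) (Nd (Lf 12) (Lf 11) (Nd (Lf 15) (Lf 14) (Lf 16) (Lf 16)) (Lf 13))) (Lf 18) (Lf 18)) (Lf 8) (Lf 8) (Lf 8)) (Lf 6)))) (Nd (Lf 2) (Lf 2) (Nd (Lf 4) (Lf 3) (Nd (Lf 7) (Lf 6) (Lf 6) (Nd (Nd (Lf 17) (Nd (Lf 10) (Lf 9) (Nd (Lf 12) (Lf 11) (Lf 13) (Nd (Lf 15) (Lf 14) (Lf 16) (Lf 16))) (Nd (Lf 12) (Lf 11) (Nd (Lf 15) (Lf 14) (Lf 16) (Lf 16)) (Lf 13))) (Lf 18) (Lf 18)) (Lf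 8) (Lf 8) (Lf 8))) (Lf 5)) (Lf 2))) (Lf 0) (Nd (Nd (Lf 2) (Lf 2) (Lf 2) (Nd (Lf 5) (Lf 3) (Lf 4) (Nd (Nd (Lf 8) (Lf 8) (Nd (Lf 18) (Nd (Nd (Lf 13) (Lf 11) (Lf 12) (Nd (Lf 16) (Lf 14) (Lf 15) (Lf 16))) (Lf 9) (Lf 10) (Nd (Nd (Lf 16) (Lf 14) (Lf 15) (Lf 16)) (Lf 11) (Lf 12) (Lf 13))) (Lf 17) (Lf 18)) (Lf 8)) (Lf 6) (Lf 7) (Lf 6)))) (Lf 1) (Lf 1) (Nd (Nd (Nd (Lf 6) (Lf 6) (Lf 7) (Nd (Lf 8) (Lf 8) (Nd (Lf 18) (Nd (Nd (Lf 13) (Lf 11) (Lf 12) (Nd (Lf 16) (Lf 14) (Lf 15) (Lf 16))) (Lf 9) (Lf 10) (Nd (Nd (Lf 16) (Lf 14) (Lf 15) (Lf 16)) (Lf 11) (Lf 12) (Lf 13))) (Lf 17) (Lf 18)) (Lf 8))) (Lf 3) (Lf 4) (Lf 5)) (Lf 2) (Lf 2) (Lf 2))) (Nd (Nd (Lf 2) (Lf 2) (Nd (Lf 5) (Lf 3) (Nd (Nd (Lf 8) (Lf 8) (Lf 8) (Nd (Lf 18) (Nd (Nd (Lf 13) (Lf 11) (Nd (Lf 16) (Lf 14) (Lf 16) (Lf 15)) (Lf 12)) (Lf 9) (Nd (Nd (Lf 16) (Lf 14) (Lf 16) (Lf 15)) (Lf 11) (Lf 13) (Lf 12)) (Lf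 10)) (Lf 18) (Lf 17))) (Lf 6) (Lf 6) (Lf 7)) (Lf 4)) (Lf 2)) (Lf 1) (Nd (Nd (Nd (Lf 6) (Lf 6) (Nd (Lf 8) (Lf 8) (Lf 8) (Nd (Lf 18) (Nd (Nd (Lf 13) (Lf 11) (Nd (Lf 16) (Lf 14) (Lf 16) (Lf 15)) (Lf 12)) (Lf 9) (Nd (Nd (Lf 16) (Lf 14) (Lf 16) (Lf 15)) (Lf 11) (Lf 13) (Lf 12)) (Lf 10)) (Lf 18) (Lf 17))) (Lf 7)) (Lf 3) (Lf 5) (Lf 4)) (Lf 2) (Lf 2) (Lf 2)) (Lf 1))) (Nd (Nd (Lf 1) (Nd (Lf 2) (Lf 2) (Lf 2) (Nd (Lf 4) (Lf 5) (Lf 3) (Nd (Lf 7) (Nd (Nd (Lf 17) (Lf 18) (Nd (Lf 10) (Nd (Lf 12) (Lf 13) (Lf 11) (Nd (Lf 15) (Lf 16) (Lf 14) (Lf 16))) (Lf 9) (Nd (Lf 12) (Nd (Lf 15) (Lf 16) (Lf 14) (Lf 16)) (Lf 11) (Lf 13))) (Lf 18)) (Lf 8) (Lf 8) (Lf 8)) (Lf 6) (Lf 6)))) (Lf 1) (Nd (Lf 2) (Nd (Lf 4) (Nd (Lf 7) (Lf 6) (Lf 6) (Nd (Nd (Lf 17) (Lf 18) (Nd (Lf 10) (Nd (Lf 12) (Lf 13) (Lf 11) (Nd (Lf 15) (Lf 16) (Lf 14) (Lf 16))) (Lf 9) (Nd (Lf 12) (Nd (Lf 15) (Lf 16) (Lf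 14) (Lf 16)) (Lf 11) (Lf 13))) (Lf 18)) (Lf 8) (Lf 8) (Lf 8))) (Lf 3) (Lf 5)) (Lf 2) (Lf 2))) (Nd (Nd (Lf 2) (Lf 2) (Lf 2) (Nd (Lf 5) (Lf 4) (Lf 3) (Nd (Nd (Lf 8) (Nd (Lf 18) (Lf 17) (Nd (Nd (Lf 13) (Lf 12) (Lf 11) (Nd (Lf 16) (Lf 15) (Lf 14) (Lf 16))) (Lf 10) (Lf 9) (Nd (Nd (Lf 16) (Lf 15) (Lf 14) (Lf 16)) (Lf 12) (Lf 11) (Lf 13))) (Lf 18)) (Lf 8) (Lf 8)) (Lf 7) (Lf 6) (Lf 6)))) (Lf 1) (Lf 1) (Nd (Nd (Nd (Lf 6) (Lf 7) (Lf 6) (Nd (Lf 8) (Nd (Lf 18) (Lf 17) (Nd (Nd (Lf 13) (Lf 12) (Lf 11) (Nd (Lf 16) (Lf 15) (Lf 14) (Lf 16))) (Lf 10) (Lf 9) (Nd (Nd (Lf 16) (Lf 15) (Lf 14) (Lf 16)) (Lf 12) (Lf 11) (Lf 13))) (Lf 18)) (Lf 8) (Lf 8))) (Lf 4) (Lf 3) (Lf 5)) (Lf 2) (Lf 2) (Lf 2))) (Lf 0) (Nd (Nd (Lf 2) (Nd (Lf 5) (Nd (Nd (Lf 8) (Lf 8) (Lf 8) (Nd (Lf 18) (Lf 18) (Nd (Nd (Lf 13) (Nd (Lf 16) (Lf 16) (Lf 14) (Lf 15)) (Lf 11) (Lf 12)) (Nd (Nd (Lf 16) (Lf 16) (Lf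 14) (Lf 15)) (Lf 13) (Lf 11) (Lf 12)) (Lf 9) (Lf 10)) (Lf 17))) (Lf 6) (Lf 6) (Lf 7)) (Lf 3) (Lf 4)) (Lf 2) (Lf 2)) (Nd (Nd (Nd (Lf 6) (Nd (Lf 8) (Lf 8) (Lf 8) (Nd (Lf 18) (Lf 18) (Nd (Nd (Lf 13) (Nd (Lf 16) (Lf 16) (Lf 14) (Lf 15)) (Lf 11) (Lf 12)) (Nd (Nd (Lf 16) (Lf 16) (Lf 14) (Lf 15)) (Lf 13) (Lf 11) (Lf 12)) (Lf 9) (Lf 10)) (Lf 17))) (Lf 6) (Lf 7)) (Lf 5) (Lf 3) (Lf 4)) (Lf 2) (Lf 2) (Lf 2)) (Lf 1) (Lf 1))) (Nd (Nd (Lf 1) (Nd (Lf 2) (Lf 2) (Nd (Lf 4) (Lf 5) (Nd (Lf 7) (Nd (Nd (Lf 17) (Lf 18) (Lf 18) (Nd (Lf 10) (Nd (Lf 12) (Lf 13) (Nd (Lf 15) (Lf 16) (Lf 16) (Lf 14)) (Lf 11)) (Nd (Lf 12) (Nd (Lf 15) (Lf 16) (Lf 16) (Lf 14)) (Lf 13) (Lf 11)) (Lf 9))) (Lf 8) (Lf 8) (Lf 8)) (Lf 6) (Lf 6)) (Lf 3)) (Lf 2)) (Nd (Lf 2) (Nd (Lf 4) (Nd (Lf 7) (Lf 6) (Nd (Nd (Lf 17) (Lf 18) (Lf 18) (Nd (Lf 10) (Nd (Lf 12) (Lf 13) (Nd (Lf 15) (Lf 16) (Lf 16) (Lf 14))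 (Lf 11)) (Nd (Lf 12) (Nd (Lf 15) (Lf 16) (Lf 16) (Lf 14)) (Lf 13) (Lf 11)) (Lf 9))) (Lf 8) (Lf 8) (Lf 8)) (Lf 6)) (Lf 5) (Lf 3)) (Lf 2) (Lf 2)) (Lf 1)) (Nd (Nd (Lf 2) (Lf 2) (Nd (Lf 5) (Lf 4) (Nd (Nd (Lf 8) (Nd (Lf 18) (Lf 17) (Lf 18) (Nd (Nd (Lf 13) (Lf 12) (Nd (Lf 16) (Lf 15) (Lf 16) (Lf 14)) (Lf 11)) (Lf 10) (Nd (Nd (Lf 16) (Lf 15) (Lf 16) (Lf 14)) (Lf 12) (Lf 13) (Lf 11)) (Lf 9))) (Lf 8) (Lf 8)) (Lf 7) (Lf 6) (Lf 6)) (Lf 3)) (Lf 2)) (Lf 1) (Nd (Nd (Nd (Lf 6) (Lf 7) (Nd (Lf 8) (Nd (Lf 18) (Lf 17) (Lf 18) (Nd (Nd (Lf 13) (Lf 12) (Nd (Lf 16) (Lf 15) (Lf 16) (Lf 14)) (Lf 11)) (Lf 10) (Nd (Nd (Lf 16) (Lf 15) (Lf 16) (Lf 14)) (Lf 12) (Lf 13) (Lf 11)) (Lf 9))) (Lf 8) (Lf 8)) (Lf 6)) (Lf 4) (Lf 5) (Lf 3)) (Lf 2) (Lf 2) (Lf 2)) (Lf 1)) (Nd (Nd (Lf 2) (Nd (Lf 5) (Nd (Nd (Lf 8) (Lf 8) (Nd (Lf 18) (Lf 18) (Lf 17) (Nd (Nd (Lf 13) (Nd (Lf 16) (Lf 16)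 (Lf 15) (Lf 14)) (Lf 12) (Lf 11)) (Nd (Nd (Lf 16) (Lf 16) (Lf 15) (Lf 14)) (Lf 13) (Lf 12) (Lf 11)) (Lf 10) (Lf 9))) (Lf 8)) (Lf 6) (Lf 7) (Lf 6)) (Lf 4) (Lf 3)) (Lf 2) (Lf 2)) (Nd (Nd (Nd (Lf 6) (Nd (Lf 8) (Lf 8) (Nd (Lf 18) (Lf 18) (Lf 17) (Nd (Nd (Lf 13) (Nd (Lf 16) (Lf 16) (Lf 15) (Lf 14)) (Lf 12) (Lf 11)) (Nd (Nd (Lf 16) (Lf 16) (Lf 15) (Lf 14)) (Lf 13) (Lf 12) (Lf 11)) (Lf 10) (Lf 9))) (Lf 8)) (Lf 7) (Lf 6)) (Lf 5) (Lf 4) (Lf 3)) (Lf 2) (Lf 2) (Lf 2)) (Lf 1) (Lf 1)) (Lf 0))"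

definition treeR :: ct where
  "treeR = Nd (Nd (Lf 0) (Nd (Lf 1) (Lf 1) (Nd (Lf 2) (Lf 2) (Lf 2) (Nd (Lf 3) (Lf 4) (Lf 5) (Nd (Lf 6) (Lf 7) (Nd (Lf 8) (Nd (Nd (Lf 9) (Lf 10) (Nd (Lf 11) (Lf 12) (Lf 13) (Nd (Lf 14) (Lf 15) (Nd (Lf 16) (Nd (Lf 17) (Lf 18) (Lf 19) (Nd (Lf 20) (Lf 21) (Lf 22) (Lf 23))) (Lf 24) (Nd (Lf 17) (Nd (Lf 20) (Lf 21) (Lf 22) (Lf 23)) (Lf 19) (Lf 25))) (Lf 26))) (Nd (Lf 11) (Lf 12) (Nd (Lf 14) (Lf 15) (Nd (Lf 16) (Nd (Lf 17) (Lf 18) (Lf 27) (Nd (Lf 20) (Lf 21) (Lf 22) (Lf 23))) (Lf 24) (Nd (Lf 17) (Nd (Lf 20) (Lf 21) (Lf 22) (Lf 23)) (Lf 27) (Lf 19))) (Lf 26)) (Lf 28))) (Lf 29) (Lf 29) (Lf 29)) (Lf 30) (Lf 30)) (Lf 31)))) (Nd (Lf 2) (Lf 2) (Nd (Lf 3) (Lf 4) (Nd (Lf 6) (Lf 7) (Lf 31) (Nd (Lf 8) (Nd (Nd (Lf 9) (Lf 10) (Nd (Lf 11) (Lf 12) (Lf 28) (Nd (Lf 14) (Lf 15) (Lf 26) (Nd (Lf 16) (Nd (Lf 17) (Lf 18) (Nd (Lf 20) (Lf 21) (Lf 23) (Lf 22)) (Lf 27)) (Nd (Lf 17) (Nd (Lf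 20) (Lf 21) (Lf 23) (Lf 22)) (Lf 19) (Lf 27)) (Lf 24)))) (Nd (Lf 11) (Lf 12) (Nd (Lf 14) (Lf 15) (Lf 26) (Nd (Lf 16) (Nd (Lf 17) (Lf 18) (Nd (Lf 20) (Lf 21) (Lf 23) (Lf 22)) (Lf 19)) (Nd (Lf 17) (Nd (Lf 20) (Lf 21) (Lf 23) (Lf 22)) (Lf 25) (Lf 19)) (Lf 24))) (Lf 13))) (Lf 29) (Lf 29) (Lf 29)) (Lf 30) (Lf 30))) (Lf 5)) (Lf 2))) (Nd (Lf 1) (Nd (Lf 2) (Lf 2) (Lf 2) (Nd (Lf 3) (Lf 5) (Lf 4) (Nd (Lf 6) (Nd (Lf 8) (Lf 30) (Nd (Nd (Lf 9) (Nd (Lf 11) (Lf 13) (Lf 12) (Nd (Lf 14) (Nd (Lf 16) (Lf 24) (Nd (Lf 17) (Lf 19) (Lf 18) (Nd (Lf 20) (Lf 22) (Lf 21) (Lf 23))) (Nd (Lf 17) (Lf 19) (Nd (Lf 20) (Lf 22) (Lf 21) (Lf 23)) (Lf 25))) (Lf 15) (Lf 26))) (Lf 10) (Nd (Lf 11) (Nd (Lf 14) (Nd (Lf 16) (Lf 24) (Nd (Lf 17) (Lf 27) (Lf 18) (Nd (Lf 20) (Lf 22) (Lf 21) (Lf 23))) (Nd (Lf 17) (Lf 27) (Nd (Lf 20) (Lf 22) (Lf 21) (Lf 23)) (Lf 19))) (Lf 15) (Lf 26)) (Lf 12) (Lf 28))) (Lf 29) (Lf 29) (Lf 29)) (Lf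 30)) (Lf 7) (Lf 31)))) (Lf 1) (Nd (Lf 2) (Nd (Lf 3) (Nd (Lf 6) (Lf 31) (Lf 7) (Nd (Lf 8) (Lf 30) (Nd (Nd (Lf 9) (Nd (Lf 11) (Lf 28) (Lf 12) (Nd (Lf 14) (Lf 26) (Lf 15) (Nd (Lf 16) (Nd (Lf 17) (Lf 19) (Nd (Lf 20) (Lf 23) (Lf 21) (Lf 22)) (Lf 27)) (Nd (Lf 17) (Nd (Lf 20) (Lf 23) (Lf 21) (Lf 22)) (Lf 18) (Lf 27)) (Lf 24)))) (Lf 10) (Nd (Lf 11) (Nd (Lf 14) (Lf 26) (Lf 15) (Nd (Lf 16) (Nd (Lf 17) (Lf 25) (Nd (Lf 20) (Lf 23) (Lf 21) (Lf 22)) (Lf 19)) (Nd (Lf 17) (Nd (Lf 20) (Lf 23) (Lf 21) (Lf 22)) (Lf 18) (Lf 19)) (Lf 24))) (Lf 12) (Lf 13))) (Lf 29) (Lf 29) (Lf 29)) (Lf 30))) (Lf 4) (Lf 5)) (Lf 2) (Lf 2))) (Nd (Lf 1) (Nd (Lf 2) (Lf 2) (Nd (Lf 3) (Lf 5) (Nd (Lf 6) (Nd (Lf 8) (Lf 30) (Lf 30) (Nd (Nd (Lf 9) (Nd (Lf 11) (Lf 13) (Nd (Lf 14) (Nd (Lf 16) (Lf 24) (Nd (Lf 17) (Lf 19) (Lf 25) (Nd (Lf 20) (Lf 22) (Lf 23) (Lf 21))) (Nd (Lf 17) (Lf 19) (Nd (Lf 20) (Lf 22) (Lf 23) (Lf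 21)) (Lf 18))) (Lf 26) (Lf 15)) (Lf 12)) (Nd (Lf 11) (Nd (Lf 14) (Nd (Lf 16) (Lf 24) (Nd (Lf 17) (Lf 27) (Lf 19) (Nd (Lf 20) (Lf 22) (Lf 23) (Lf 21))) (Nd (Lf 17) (Lf 27) (Nd (Lf 20) (Lf 22) (Lf 23) (Lf 21)) (Lf 18))) (Lf 26) (Lf 15)) (Lf 28) (Lf 12)) (Lf 10)) (Lf 29) (Lf 29) (Lf 29))) (Lf 31) (Lf 7)) (Lf 4)) (Lf 2)) (Nd (Lf 2) (Nd (Lf 3) (Nd (Lf 6) (Lf 31) (Nd (Lf 8) (Lf 30) (Lf 30) (Nd (Nd (Lf 9) (Nd (Lf 11) (Lf 28) (Nd (Lf 14) (Lf 26) (Nd (Lf 16) (Nd (Lf 17) (Lf 19) (Lf 27) (Nd (Lf 20) (Lf 23) (Lf 22) (Lf 21))) (Lf 24) (Nd (Lf 17) (Nd (Lf 20) (Lf 23) (Lf 22) (Lf 21)) (Lf 27) (Lf 18))) (Lf 15)) (Lf 12)) (Nd (Lf 11) (Nd (Lf 14) (Lf 26) (Nd (Lf 16) (Nd (Lf 17) (Lf 25) (Lf 19) (Nd (Lf 20) (Lf 23) (Lf 22) (Lf 21))) (Lf 24) (Nd (Lf 17) (Nd (Lf 20) (Lf 23) (Lf 22) (Lf 21)) (Lf 19) (Lf 18))) (Lf 15)) (Lf 13) (Lf 12)) (Lf 10)) (Lf 29) (Lf 29) (Lf 29))) (Lf 7)) (Lf 5) (Lf 4)) (Lf 2) (Lf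 2)) (Lf 1))) (Nd (Nd (Lf 1) (Lf 1) (Nd (Lf 2) (Lf 2) (Lf 2) (Nd (Lf 4) (Lf 3) (Lf 5) (Nd (Lf 7) (Lf 6) (Nd (Nd (Lf 29) (Nd (Lf 10) (Lf 9) (Nd (Lf 12) (Lf 11) (Lf 13) (Nd (Lf 15) (Lf 14) (Nd (Nd (Lf 18) (Lf 17) (Lf 19) (Nd (Lf 21) (Lf 20) (Lf 22) (Lf 23))) (Lf 16) (Lf 24) (Nd (Nd (Lf 21) (Lf 20) (Lf 22) (Lf 23)) (Lf 17) (Lf 19) (Lf 25))) (Lf 26))) (Nd (Lf 12) (Lf 11) (Nd (Lf 15) (Lf 14) (Nd (Nd (Lf 18) (Lf 17) (Lf 27) (Nd (Lf 21) (Lf 20) (Lf 22) (Lf 23))) (Lf 16) (Lf 24) (Nd (Nd (Lf 21) (Lf 20) (Lf 22) (Lf 23)) (Lf 17) (Lf 27) (Lf 19))) (Lf 26)) (Lf 28))) (Lf 29) (Lf 29)) (Lf 8) (Lf 30) (Lf 30)) (Lf 31)))) (Nd (Lf 2) (Lf 2) (Nd (Lf 4) (Lf 3) (Nd (Lf 7) (Lf 6) (Lf 31) (Nd (Nd (Lf 29) (Nd (Lf 10) (Lf 9) (Nd (Lf 12) (Lf 11) (Lf 28) (Nd (Lf 15) (Lf 14) (Lf 26) (Nd (Nd (Lf 18) (Lf 17) (Nd (Lf 21) (Lf 20) (Lf 23) (Lf 22)) (Lf 27)) (Lf 16) (Nd (Nd (Lf 21) (Lf 20) (Lf 23) (Lf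 22)) (Lf 17) (Lf 19) (Lf 27)) (Lf 24)))) (Nd (Lf 12) (Lf 11) (Nd (Lf 15) (Lf 14) (Lf 26) (Nd (Nd (Lf 18) (Lf 17) (Nd (Lf 21) (Lf 20) (Lf 23) (Lf 22)) (Lf 19)) (Lf 16) (Nd (Nd (Lf 21) (Lf 20) (Lf 23) (Lf 22)) (Lf 17) (Lf 25) (Lf 19)) (Lf 24))) (Lf 13))) (Lf 29) (Lf 29)) (Lf 8) (Lf 30) (Lf 30))) (Lf 5)) (Lf 2))) (Lf 0) (Nd (Nd (Lf 2) (Lf 2) (Lf 2) (Nd (Lf 5) (Lf 3) (Lf 4) (Nd (Nd (Lf 30) (Lf 8) (Nd (Lf 29) (Nd (Nd (Lf 13) (Lf 11) (Lf 12) (Nd (Nd (Lf 24) (Lf 16) (Nd (Lf 19) (Lf 17) (Lf 18) (Nd (Lf 22) (Lf 20) (Lf 21) (Lf 23))) (Nd (Lf 19) (Lf 17) (Nd (Lf 22) (Lf 20) (Lf 21) (Lf 23)) (Lf 25))) (Lf 14) (Lf 15) (Lf 26))) (Lf 9) (Lf 10) (Nd (Nd (Nd (Lf 24) (Lf 16) (Nd (Lf 27) (Lf 17) (Lf 18) (Nd (Lf 22) (Lf 20) (Lf 21) (Lf 23))) (Nd (Lf 27) (Lf 17) (Nd (Lf 22) (Lf 20) (Lf 21) (Lf 23)) (Lf 19))) (Lf 14) (Lf 15) (Lf 26)) (Lf 11) (Lf 12) (Lf 28))) (Lf 29) (Lf 29)) (Lf 30)) (Lf 6) (Lf 7) (Lf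 31)))) (Lf 1) (Lf 1) (Nd (Nd (Nd (Lf 31) (Lf 6) (Lf 7) (Nd (Lf 30) (Lf 8) (Nd (Lf 29) (Nd (Nd (Lf 28) (Lf 11) (Lf 12) (Nd (Lf 26) (Lf 14) (Lf 15) (Nd (Nd (Lf 19) (Lf 17) (Nd (Lf 23) (Lf 20) (Lf 21) (Lf 22)) (Lf 27)) (Lf 16) (Nd (Nd (Lf 23) (Lf 20) (Lf 21) (Lf 22)) (Lf 17) (Lf 18) (Lf 27)) (Lf 24)))) (Lf 9) (Lf 10) (Nd (Nd (Lf 26) (Lf 14) (Lf 15) (Nd (Nd (Lf 25) (Lf 17) (Nd (Lf 23) (Lf 20) (Lf 21) (Lf 22)) (Lf 19)) (Lf 16) (Nd (Nd (Lf 23) (Lf 20) (Lf 21) (Lf 22)) (Lf 17) (Lf 18) (Lf 19)) (Lf 24))) (Lf 11) (Lf 12) (Lf 13))) (Lf 29) (Lf 29)) (Lf 30))) (Lf 3) (Lf 4) (Lf 5)) (Lf 2) (Lf 2) (Lf 2))) (Nd (Nd (Lf 2) (Lf 2) (Nd (Lf 5) (Lf 3) (Nd (Nd (Lf 30) (Lf 8) (Lf 30) (Nd (Lf 29) (Nd (Nd (Lf 13) (Lf 11) (Nd (Nd (Lf 24) (Lf 16) (Nd (Lf 19) (Lf 17) (Lf 25) (Nd (Lf 22) (Lf 20) (Lf 23) (Lf 21))) (Nd (Lf 19) (Lf 17) (Nd (Lf 22) (Lf 20) (Lf 23) (Lf 21)) (Lf 18))) (Lf 14) (Lf 26) (Lf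 15)) (Lf 12)) (Lf 9) (Nd (Nd (Nd (Lf 24) (Lf 16) (Nd (Lf 27) (Lf 17) (Lf 19) (Nd (Lf 22) (Lf 20) (Lf 23) (Lf 21))) (Nd (Lf 27) (Lf 17) (Nd (Lf 22) (Lf 20) (Lf 23) (Lf 21)) (Lf 18))) (Lf 14) (Lf 26) (Lf 15)) (Lf 11) (Lf 28) (Lf 12)) (Lf 10)) (Lf 29) (Lf 29))) (Lf 6) (Lf 31) (Lf 7)) (Lf 4)) (Lf 2)) (Lf 1) (Nd (Nd (Nd (Lf 31) (Lf 6) (Nd (Lf 30) (Lf 8) (Lf 30) (Nd (Lf 29) (Nd (Nd (Lf 28) (Lf 11) (Nd (Lf 26) (Lf 14) (Nd (Nd (Lf 19) (Lf 17) (Lf 27) (Nd (Lf 23) (Lf 20) (Lf 22) (Lf 21))) (Lf 16) (Lf 24) (Nd (Nd (Lf 23) (Lf 20) (Lf 22) (Lf 21)) (Lf 17) (Lf 27) (Lf 18))) (Lf 15)) (Lf 12)) (Lf 9) (Nd (Nd (Lf 26) (Lf 14) (Nd (Nd (Lf 25) (Lf 17) (Lf 19) (Nd (Lf 23) (Lf 20) (Lf 22) (Lf 21))) (Lf 16) (Lf 24) (Nd (Nd (Lf 23) (Lf 20) (Lf 22) (Lf 21)) (Lf 17) (Lf 19) (Lf 18))) (Lf 15)) (Lf 11) (Lf 13) (Lf 12)) (Lf 10)) (Lf 29) (Lf 29))) (Lf 7)) (Lf 3) (Lf 5) (Lf 4)) (Lf 2) (Lf 2) (Lf 2)) (Lf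 1))) (Nd (Nd (Lf 1) (Nd (Lf 2) (Lf 2) (Lf 2) (Nd (Lf 4) (Lf 5) (Lf 3) (Nd (Lf 7) (Nd (Nd (Lf 29) (Lf 29) (Nd (Lf 10) (Nd (Lf 12) (Lf 13) (Lf 11) (Nd (Lf 15) (Nd (Nd (Lf 18) (Lf 19) (Lf 17) (Nd (Lf 21) (Lf 22) (Lf 20) (Lf 23))) (Lf 24) (Lf 16) (Nd (Nd (Lf 21) (Lf 22) (Lf 20) (Lf 23)) (Lf 19) (Lf 17) (Lf 25))) (Lf 14) (Lf 26))) (Lf 9) (Nd (Lf 12) (Nd (Lf 15) (Nd (Nd (Lf 18) (Lf 27) (Lf 17) (Nd (Lf 21) (Lf 22) (Lf 20) (Lf 23))) (Lf 24) (Lf 16) (Nd (Nd (Lf 21) (Lf 22) (Lf 20) (Lf 23)) (Lf 27) (Lf 17) (Lf 19))) (Lf 14) (Lf 26)) (Lf 11) (Lf 28))) (Lf 29)) (Lf 30) (Lf 8) (Lf 30)) (Lf 6) (Lf 31)))) (Lf 1) (Nd (Lf 2) (Nd (Lf 4) (Nd (Lf 7) (Lf 31) (Lf 6) (Nd (Nd (Lf 29) (Lf 29) (Nd (Lf 10) (Nd (Lf 12) (Lf 28) (Lf 11) (Nd (Lf 15) (Lf 26) (Lf 14) (Nd (Nd (Lf 18) (Nd (Lf 21) (Lf 23) (Lf 20) (Lf 22)) (Lf 17) (Lf 27)) (Nd (Nd (Lf 21) (Lf 23) (Lf 20) (Lf 22)) (Lf 19) (Lf 17) (Lf 27)) (Lf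 16) (Lf 24)))) (Lf 9) (Nd (Lf 12) (Nd (Lf 15) (Lf 26) (Lf 14) (Nd (Nd (Lf 18) (Nd (Lf 21) (Lf 23) (Lf 20) (Lf 22)) (Lf 17) (Lf 19)) (Nd (Nd (Lf 21) (Lf 23) (Lf 20) (Lf 22)) (Lf 25) (Lf 17) (Lf 19)) (Lf 16) (Lf 24))) (Lf 11) (Lf 13))) (Lf 29)) (Lf 30) (Lf 8) (Lf 30))) (Lf 3) (Lf 5)) (Lf 2) (Lf 2))) (Nd (Nd (Lf 2) (Lf 2) (Lf 2) (Nd (Lf 5) (Lf 4) (Lf 3) (Nd (Nd (Lf 30) (Nd (Lf 29) (Lf 29) (Nd (Nd (Lf 13) (Lf 12) (Lf 11) (Nd (Nd (Lf 24) (Nd (Lf 19) (Lf 18) (Lf 17) (Nd (Lf 22) (Lf 21) (Lf 20) (Lf 23))) (Lf 16) (Nd (Lf 19) (Nd (Lf 22) (Lf 21) (Lf 20) (Lf 23)) (Lf 17) (Lf 25))) (Lf 15) (Lf 14) (Lf 26))) (Lf 10) (Lf 9) (Nd (Nd (Nd (Lf 24) (Nd (Lf 27) (Lf 18) (Lf 17) (Nd (Lf 22) (Lf 21) (Lf 20) (Lf 23))) (Lf 16) (Nd (Lf 27) (Nd (Lf 22) (Lf 21) (Lf 20) (Lf 23)) (Lf 17) (Lf 19))) (Lf 15) (Lf 14) (Lf 26)) (Lf 12) (Lf 11) (Lf 28))) (Lf 29)) (Lf 8) (Lf 30)) (Lf 7) (Lf 6) (Lf 31)))) (Lf 1) (Lf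 1) (Nd (Nd (Nd (Lf 31) (Lf 7) (Lf 6) (Nd (Lf 30) (Nd (Lf 29) (Lf 29) (Nd (Nd (Lf 28) (Lf 12) (Lf 11) (Nd (Lf 26) (Lf 15) (Lf 14) (Nd (Nd (Lf 19) (Nd (Lf 23) (Lf 21) (Lf 20) (Lf 22)) (Lf 17) (Lf 27)) (Nd (Nd (Lf 23) (Lf 21) (Lf 20) (Lf 22)) (Lf 18) (Lf 17) (Lf 27)) (Lf 16) (Lf 24)))) (Lf 10) (Lf 9) (Nd (Nd (Lf 26) (Lf 15) (Lf 14) (Nd (Nd (Lf 25) (Nd (Lf 23) (Lf 21) (Lf 20) (Lf 22)) (Lf 17) (Lf 19)) (Nd (Nd (Lf 23) (Lf 21) (Lf 20) (Lf 22)) (Lf 18) (Lf 17) (Lf 19)) (Lf 16) (Lf 24))) (Lf 12) (Lf 11) (Lf 13))) (Lf 29)) (Lf 8) (Lf 30))) (Lf 4) (Lf 3) (Lf 5)) (Lf 2) (Lf 2) (Lf 2))) (Lf 0) (Nd (Nd (Lf 2) (Nd (Lf 5) (Nd (Nd (Lf 30) (Lf 30) (Lf 8) (Nd (Lf 29) (Lf 29) (Nd (Nd (Lf 13) (Nd (Nd (Lf 24) (Nd (Lf 19) (Lf 25) (Lf 17) (Nd (Lf 22) (Lf 23) (Lf 20) (Lf 21))) (Lf 16) (Nd (Lf 19) (Nd (Lf 22) (Lf 23) (Lf 20) (Lf 21)) (Lf 17) (Lf 18))) (Lf 26) (Lf 14) (Lf 15)) (Lf 11) (Lf 12)) (Nd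 (Nd (Nd (Lf 24) (Nd (Lf 27) (Lf 19) (Lf 17) (Nd (Lf 22) (Lf 23) (Lf 20) (Lf 21))) (Lf 16) (Nd (Lf 27) (Nd (Lf 22) (Lf 23) (Lf 20) (Lf 21)) (Lf 17) (Lf 18))) (Lf 26) (Lf 14) (Lf 15)) (Lf 28) (Lf 11) (Lf 12)) (Lf 9) (Lf 10)) (Lf 29))) (Lf 31) (Lf 6) (Lf 7)) (Lf 3) (Lf 4)) (Lf 2) (Lf 2)) (Nd (Nd (Nd (Lf 31) (Nd (Lf 30) (Lf 30) (Lf 8) (Nd (Lf 29) (Lf 29) (Nd (Nd (Lf 28) (Nd (Lf 26) (Nd (Nd (Lf 19) (Lf 27) (Lf 17) (Nd (Lf 23) (Lf 22) (Lf 20) (Lf 21))) (Lf 24) (Lf 16) (Nd (Nd (Lf 23) (Lf 22) (Lf 20) (Lf 21)) (Lf 27) (Lf 17) (Lf 18))) (Lf 14) (Lf 15)) (Lf 11) (Lf 12)) (Nd (Nd (Lf 26) (Nd (Nd (Lf 25) (Lf 19) (Lf 17) (Nd (Lf 23) (Lf 22) (Lf 20) (Lf 21))) (Lf 24) (Lf 16) (Nd (Nd (Lf 23) (Lf 22) (Lf 20) (Lf 21)) (Lf 19) (Lf 17) (Lf 18))) (Lf 14) (Lf 15)) (Lf 13) (Lf 11) (Lf 12)) (Lf 9) (Lf 10)) (Lf 29))) (Lf 6) (Lf 7)) (Lf 5) (Lf 3) (Lf 4)) (Lf 2) (Lf 2) (Lf 2)) (Lf 1) (Lf 1))) (Nd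 (Nd (Lf 1) (Nd (Lf 2) (Lf 2) (Nd (Lf 4) (Lf 5) (Nd (Lf 7) (Nd (Nd (Lf 29) (Lf 29) (Lf 29) (Nd (Lf 10) (Nd (Lf 12) (Lf 13) (Nd (Lf 15) (Nd (Nd (Lf 18) (Lf 19) (Nd (Lf 21) (Lf 22) (Lf 23) (Lf 20)) (Lf 17)) (Lf 24) (Nd (Nd (Lf 21) (Lf 22) (Lf 23) (Lf 20)) (Lf 19) (Lf 25) (Lf 17)) (Lf 16)) (Lf 26) (Lf 14)) (Lf 11)) (Nd (Lf 12) (Nd (Lf 15) (Nd (Nd (Lf 18) (Lf 27) (Nd (Lf 21) (Lf 22) (Lf 23) (Lf 20)) (Lf 17)) (Lf 24) (Nd (Nd (Lf 21) (Lf 22) (Lf 23) (Lf 20)) (Lf 27) (Lf 19) (Lf 17)) (Lf 16)) (Lf 26) (Lf 14)) (Lf 28) (Lf 11)) (Lf 9))) (Lf 30) (Lf 30) (Lf 8)) (Lf 31) (Lf 6)) (Lf 3)) (Lf 2)) (Nd (Lf 2) (Nd (Lf 4) (Nd (Lf 7) (Lf 31) (Nd (Nd (Lf 29) (Lf 29) (Lf 29) (Nd (Lf 10) (Nd (Lf 12) (Lf 28) (Nd (Lf 15) (Lf 26) (Nd (Nd (Lf 18) (Nd (Lf 21) (Lf 23) (Lf 22) (Lf 20)) (Lf 27) (Lf 17)) (Nd (Nd (Lf 21) (Lf 23) (Lf 22) (Lf 20)) (Lf 19) (Lf 27) (Lf 17)) (Lf 24) (Lf 16)) (Lf 14)) (Lf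 11)) (Nd (Lf 12) (Nd (Lf 15) (Lf 26) (Nd (Nd (Lf 18) (Nd (Lf 21) (Lf 23) (Lf 22) (Lf 20)) (Lf 19) (Lf 17)) (Nd (Nd (Lf 21) (Lf 23) (Lf 22) (Lf 20)) (Lf 25) (Lf 19) (Lf 17)) (Lf 24) (Lf 16)) (Lf 14)) (Lf 13) (Lf 11)) (Lf 9))) (Lf 30) (Lf 30) (Lf 8)) (Lf 6)) (Lf 5) (Lf 3)) (Lf 2) (Lf 2)) (Lf 1)) (Nd (Nd (Lf 2) (Lf 2) (Nd (Lf 5) (Lf 4) (Nd (Nd (Lf 30) (Nd (Lf 29) (Lf 29) (Lf 29) (Nd (Nd (Lf 13) (Lf 12) (Nd (Nd (Lf 24) (Nd (Lf 19) (Lf 18) (Nd (Lf 22) (Lf 21) (Lf 23) (Lf 20)) (Lf 17)) (Nd (Lf 19) (Nd (Lf 22) (Lf 21) (Lf 23) (Lf 20)) (Lf 25) (Lf 17)) (Lf 16)) (Lf 15) (Lf 26) (Lf 14)) (Lf 11)) (Lf 10) (Nd (Nd (Nd (Lf 24) (Nd (Lf 27) (Lf 18) (Nd (Lf 22) (Lf 21) (Lf 23) (Lf 20)) (Lf 17)) (Nd (Lf 27) (Nd (Lf 22) (Lf 21) (Lf 23) (Lf 20)) (Lf 19) (Lf 17)) (Lf 16)) (Lf 15) (Lf 26) (Lf 14)) (Lf 12) (Lf 28) (Lf 11)) (Lf 9))) (Lf 30) (Lf 8)) (Lf 7) (Lf 31) (Lf 6)) (Lf 3)) (Lf 2)) (Lf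 1) (Nd (Nd (Nd (Lf 31) (Lf 7) (Nd (Lf 30) (Nd (Lf 29) (Lf 29) (Lf 29) (Nd (Nd (Lf 28) (Lf 12) (Nd (Lf 26) (Lf 15) (Nd (Nd (Lf 19) (Nd (Lf 23) (Lf 21) (Lf 22) (Lf 20)) (Lf 27) (Lf 17)) (Nd (Nd (Lf 23) (Lf 21) (Lf 22) (Lf 20)) (Lf 18) (Lf 27) (Lf 17)) (Lf 24) (Lf 16)) (Lf 14)) (Lf 11)) (Lf 10) (Nd (Nd (Lf 26) (Lf 15) (Nd (Nd (Lf 25) (Nd (Lf 23) (Lf 21) (Lf 22) (Lf 20)) (Lf 19) (Lf 17)) (Nd (Nd (Lf 23) (Lf 21) (Lf 22) (Lf 20)) (Lf 18) (Lf 19) (Lf 17)) (Lf 24) (Lf 16)) (Lf 14)) (Lf 12) (Lf 13) (Lf 11)) (Lf 9))) (Lf 30) (Lf 8)) (Lf 6)) (Lf 4) (Lf 5) (Lf 3)) (Lf 2) (Lf 2) (Lf 2)) (Lf 1)) (Nd (Nd (Lf 2) (Nd (Lf 5) (Nd (Nd (Lf 30) (Lf 30) (Nd (Lf 29) (Lf 29) (Lf 29) (Nd (Nd (Lf 13) (Nd (Nd (Lf 24) (Nd (Lf 19) (Lf 25) (Nd (Lf 22) (Lf 23) (Lf 21) (Lf 20)) (Lf 17)) (Nd (Lf 19) (Nd (Lf 22) (Lf 23) (Lf 21) (Lf 20)) (Lf 18) (Lf 17)) (Lf 16)) (Lf 26) (Lf 15) (Lf 14)) (Lf 12) (Lf 11))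 (Nd (Nd (Nd (Lf 24) (Nd (Lf 27) (Lf 19) (Nd (Lf 22) (Lf 23) (Lf 21) (Lf 20)) (Lf 17)) (Nd (Lf 27) (Nd (Lf 22) (Lf 23) (Lf 21) (Lf 20)) (Lf 18) (Lf 17)) (Lf 16)) (Lf 26) (Lf 15) (Lf 14)) (Lf 28) (Lf 12) (Lf 11)) (Lf 10) (Lf 9))) (Lf 8)) (Lf 31) (Lf 7) (Lf 6)) (Lf 4) (Lf 3)) (Lf 2) (Lf 2)) (Nd (Nd (Nd (Lf 31) (Nd (Lf 30) (Lf 30) (Nd (Lf 29) (Lf 29) (Lf 29) (Nd (Nd (Lf 28) (Nd (Lf 26) (Nd (Nd (Lf 19) (Lf 27) (Nd (Lf 23) (Lf 22) (Lf 21) (Lf 20)) (Lf 17)) (Lf 24) (Nd (Nd (Lf 23) (Lf 22) (Lf 21) (Lf 20)) (Lf 27) (Lf 18) (Lf 17)) (Lf 16)) (Lf 15) (Lf 14)) (Lf 12) (Lf 11)) (Nd (Nd (Lf 26) (Nd (Nd (Lf 25) (Lf 19) (Nd (Lf 23) (Lf 22) (Lf 21) (Lf 20)) (Lf 17)) (Lf 24) (Nd (Nd (Lf 23) (Lf 22) (Lf 21) (Lf 20)) (Lf 19) (Lf 18) (Lf 17)) (Lf 16)) (Lf 15) (Lf 14)) (Lf 13) (Lf 12) (Lf 11)) (Lf 10) (Lf 9))) (Lf 8)) (Lf 7) (Lf 6)) (Lf 5) (Lf 4) (Lf 3)) (Lf 2) (Lf 2) (Lf 2)) (Lf 1) (Lf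 1)) (Lf 0))"

lemma validCS_all: "list_all validCS certsCS"
  by code_simp

lemma validR_all: "list_all validR certsR"
  by code_simp

lemma chkCS11: "chk leafCS certsCS 11 treeCS []"
  by code_simp

lemma chkR14: "chk leafR certsR 14 treeR []"
  by code_simp

lemma sA_sum: "length cl \<le> length p \<Longrightarrow> sA p i cl = (\<Sum>k<length cl. if p!k = i then cl!k else 0)"
  unfolding sA_def by (simp add: sum_list_sum_nth atLeast0LessThan min_absorb2)

definition c_of :: "nat list \<Rightarrow> nat \<Rightarrow> real" where
  "c_of cl r = (if 1 \<le> r \<and> r \<le> length cl then real (cl!(r-1)) else 0)"

lemma c_of_nonneg: "0 \<le> c_of cl r"
  by (simp add: c_of_def)

lemma c_of_costs:
  assumes "sorted_wrt (\<lambda>a b. b \<le> a) cl" "length cl \<le> m"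
  shows "c_of cl \<in> costs m"
proof -
  have "c_of cl s \<le> c_of cl r" if "1 \<le> r" "r \<le> s" for r s
  proof (cases "s \<le> length cl")
    case True
    show ?thesis
    proof (cases "r = s")
      case False
      then have "r - 1 < s - 1" using that by auto
      then have "cl!(s-1) \<le> cl!(r-1)" using sorted_wrt_nth_less[OF assms(1)] True by auto
      then show ?thesis using True that by (simp add: c_of_def)
    qed simp
  next
    case False
    then show ?thesis by (simp add: c_of_def)
  qed
  then show ?thesis using assms(2) unfolding costs_def by (auto simp: c_of_def)
qed

lemma sum_alloc_c_of:
  assumes "length cl \<le> length S"
  shows "(\<Sum>r\<in>alloc_bundle S i. c_of cl r) = real (sA S i cl)"
proof -
  have "(\<Sum>r\<in>alloc_bundle S i. c_of cl r) = (\<Sum>r\<in>{1..length S}. if S!(r-1) = i then c_of cl r else 0)"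
    unfolding alloc_bundle_def pick_def by (rule sum.inter_filter) simp
  also have "\<dots> = (\<Sum>k<length S. if S!k = i then c_of cl (Suc k) else 0)"
    by (simp only: One_nat_def sum.atLeast1_atMost_eq) simp
  also have "\<dots> = (\<Sum>k<length cl. if S!k = i then c_of cl (Suc k) else 0)"
    by (rule sum.mono_neutral_right) (use assms in \<open>auto simp: c_of_def\<close>)
  also have "\<dots> = real (\<Sum>k<length cl. if S!k = i then cl!k else 0)"
    unfolding of_nat_sum by (rule sum.cong) (auto simp: c_of_def)
  finally show ?thesis using assms by (simp add: sA_sum)
qed

lemma sum_c_of:
  assumes "length cl \<le> m"
  shows "(\<Sum>r\<in>{1..m}. c_of cl r) = real (sum_list cl)"
proof -
  have "(\<Sum>r\<in>{1..m}. c_of cl r) = (\<Sum>k<m. c_of cl (Suc k))"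
    by (simp only: One_nat_def sum.atLeast1_atMost_eq)
  also have "\<dots> = (\<Sum>k<length cl. c_of cl (Suc k))"
    by (rule sum.mono_neutral_right) (use assms in \<open>auto simp: c_of_def\<close>)
  also have "\<dots> = real (\<Sum>k<length cl. cl!k)"
    by (simp add: c_of_def)
  finally show ?thesis by (simp add: sum_list_sum_nth atLeast0LessThan)
qed

lemma CS_c_of:
  assumes "validCS (cl, K)" "length cl \<le> m"
  shows "52 * CS 4 m (c_of cl) \<le> real K" "0 < CS 4 m (c_of cl)"
proof -
  have ne: "cl \<noteq> []" and h: "0 < hd cl" and k1: "13 * sum_list cl \<le> K" and k2: "52 * hd cl \<le> K"
    and k3: "52 * (nth0 cl 3 + nth0 cl 4) \<le> K"
    using assms(1) by (auto simp: validCS_def)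
  have c1: "c_of cl 1 = real (hd cl)" using ne by (cases cl) (auto simp: c_of_def)
  have c4: "c_of cl 4 = real (nth0 cl 3)" by (simp add: c_of_def nth0_def)
  have c5: "c_of cl 5 = real (nth0 cl 4)" by (simp add: c_of_def nth0_def)
  have k1': "13 * real (sum_list cl) \<le> real K" using k1 by (metis of_nat_le_iff of_nat_mult of_nat_numeral)
  have k2': "52 * real (hd cl) \<le> real K" using k2 by (metis of_nat_le_iff of_nat_mult of_nat_numeral)
  have k3': "52 * (real (nth0 cl 3) + real (nth0 cl 4)) \<le> real K" using k3
    by (metis of_nat_add of_nat_le_iff of_nat_mult of_nat_numeral)
  show "52 * CS 4 m (c_of cl) \<le> real K"
    unfolding CS_def sum_c_of[OF assms(2)] c1 c4 c5 using k1' k2' k3' by (auto simp: max_def c5)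
  show "0 < CS 4 m (c_of cl)"
    unfolding CS_def c1 using h by (simp add: less_max_iff_disj)
qed


lemma finite_po: "finite (picking_orders n m)"
  unfolding picking_orders_def using finite_lists_length_eq[of "{1..n}" m]
  by (simp add: conj_commute)

lemma po_ne: "n \<ge> 1 \<Longrightarrow> picking_orders n m \<noteq> {}"
proof -
  assume "n \<ge> 1"
  then have "replicate m 1 \<in> picking_orders n m" unfolding picking_orders_def by auto
  then show ?thesis by auto
qed

lemma MMS_le:
  assumes "Q \<in> picking_orders n m" "\<forall>j\<in>{1..n}. (\<Sum>r\<in>alloc_bundle Q j. c r) \<le> B" "n \<ge> 1"
  shows "MMS n m c \<le> B"
proof -
  have "MMS n m c \<le> Max ((\<lambda>j. \<Sum>r\<in>alloc_bundle Q j. c r) ` {1..n})"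
    unfolding MMS_def by (rule Min_le) (use finite_po assms(1) in auto)
  also have "\<dots> \<le> B" using assms(2,3) by (subst Max_le_iff) auto
  finally show ?thesis .
qed

lemma MMS_pos:
  assumes "m \<ge> 1" "n \<ge> 1" "0 < c 1" "\<forall>r. 0 \<le> c r"
  shows "0 < MMS n m c"
  unfolding MMS_def
proof (subst Min_gr_iff)
  show "finite ((\<lambda>P. Max ((\<lambda>j. \<Sum>r\<in>alloc_bundle P j. c r) ` {1..n})) ` picking_orders n m)"
    using finite_po by auto
  show "(\<lambda>P. Max ((\<lambda>j. \<Sum>r\<in>alloc_bundle P j. c r) ` {1..n})) ` picking_orders n m \<noteq> {}"
    using po_ne assms(2) by auto
  show "\<forall>a\<in>(\<lambda>P. Max ((\<lambda>j. \<Sum>r\<in>alloc_bundle P j. c r) ` {1..n})) ` picking_orders n m. 0 < a"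
  proof
    fix a assume "a \<in> (\<lambda>P. Max ((\<lambda>j. \<Sum>r\<in>alloc_bundle P j. c r) ` {1..n})) ` picking_orders n m"
    then obtain P where P: "P \<in> picking_orders n m" and a: "a = Max ((\<lambda>j. \<Sum>r\<in>alloc_bundle P j. c r) ` {1..n})"
      by auto
    have lenP: "length P = m" and setP: "set P \<subseteq> {1..n}" using P by (auto simp: picking_orders_def)
    define j where "j = P!0"
    have "P!0 \<in> set P" using lenP assms(1) by (intro nth_mem) simp
    then have j: "j \<in> {1..n}" using setP unfolding j_def by blast
    have one: "1 \<in> alloc_bundle P j" using lenP assms(1) by (simp add: alloc_bundle_def pick_def j_def)
    have fin: "finite (alloc_bundle P j)" by (simp add: alloc_bundle_def)
    have "c 1 \<le> (\<Sum>r\<in>alloc_bundle P j. c r)"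
      using member_le_sum[OF one _ fin, of c] assms(4) by auto
    also have "\<dots> \<le> a" unfolding a by (rule Max_ge) (use j in auto)
    finally show "0 < a" using assms(3) by simp
  qed
qed

lemma MMS_c_of:
  assumes "validR (cl, Q, B)"
  shows "MMS 4 14 (c_of cl) \<le> real B" "0 < MMS 4 14 (c_of cl)"
proof -
  have ne: "cl \<noteq> []" and h: "0 < hd cl" and len: "length cl \<le> 14" and lQ: "length Q = 14"
    and sQ: "list_all (\<lambda>x. 1 \<le> x \<and> x \<le> 4) Q" and bins: "list_all (\<lambda>j. sA Q j cl \<le> B) [1,2,3,4]"
    using assms by (auto simp: validR_def)
  have Qpo: "Q \<in> picking_orders 4 14" using lQ sQ by (auto simp: picking_orders_def list_all_iff)
  have "\<forall>j\<in>{1..4}. (\<Sum>r\<in>alloc_bundle Q j. c_of cl r) \<le> real B"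
  proof
    fix j :: nat assume "j \<in> {1..4}"
    then have "j = 1 \<or> j = 2 \<or> j = 3 \<or> j = 4" by auto
    then have "sA Q j cl \<le> B" using bins by auto
    then show "(\<Sum>r\<in>alloc_bundle Q j. c_of cl r) \<le> real B"
      using sum_alloc_c_of[of cl Q j] len lQ by simp
  qed
  then show "MMS 4 14 (c_of cl) \<le> real B" using MMS_le[OF Qpo] by simp
  have c1: "c_of cl 1 = real (hd cl)" using ne by (cases cl) (auto simp: c_of_def)
  show "0 < MMS 4 14 (c_of cl)"
    by (rule MMS_pos) (use h c1 c_of_nonneg in auto)
qed


lemma chk_sound:
  "chk lf cs d t p \<Longrightarrow> length p + d \<le> length S \<Longrightarrow> take (length p) S = p \<Longrightarrow> set S \<subseteq> {1..4}
   \<Longrightarrow> \<exists>q c. q \<noteq> [] \<and> take (length q) S = q \<and> c \<in> set cs \<and> lf q c"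
proof (induction lf cs d t p rule: chk.induct)
  case (1 lf cs d j p)
  then show ?case by (intro exI[of _ p] exI[of _ "cs!j"]) auto
next
  case (2 lf cs t1 t2 t3 t4 p)
  then show ?case by simp
next
  case (3 lf cs d t1 t2 t3 t4 p)
  have lt: "length p < length S" using "3.prems"(2) by simp
  define i where "i = S ! length p"
  have tk: "take (length (p@[i])) S = p @ [i]"
    using lt "3.prems"(3) by (simp add: i_def take_Suc_conv_app_nth)
  have len: "length (p@[i]) + d \<le> length S" using "3.prems"(2) by simp
  have "i \<in> set S" using lt by (simp add: i_def)
  then have "i = 1 \<or> i = 2 \<or> i = 3 \<or> i = 4" using "3.prems"(4) by auto
  moreover have c: "chk lf cs d t1 (p@[1])" "chk lf cs d t2 (p@[2])" "chk lf cs d t3 (p@[3])" "chk lf cs d t4 (p@[4])"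
    using "3.prems"(1) by auto
  ultimately show ?case
    using "3.IH" len tk "3.prems"(4) by metis
qed

lemma sA_take:
  assumes "take (length q) S = q" "length cl \<le> length q"
  shows "sA q i cl = sA S i cl"
proof -
  have lq: "length q \<le> length S" using assms(1) by (metis length_take min.cobounded1 min_def)
  have "\<forall>k<length q. q!k = S!k" using assms(1) by (metis nth_take)
  then show ?thesis using assms(2) lq by (simp add: sA_sum cong: if_cong)
qed

lemma rS_lb:
  assumes "S \<in> picking_orders 4 11"
  shows "ereal (13/9) \<le> r_S 4 11 S"
proof -
  have lS: "length S = 11" and sS: "set S \<subseteq> {1..4}" using assms by (auto simp: picking_orders_def)
  obtain q ck where q: "q \<noteq> []" "take (length q) S = q" and ck: "ck \<in> set certsCS" and lf: "leafCS q ck"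
    using chk_sound[OF chkCS11, of S] lS sS by auto
  obtain cl K where ckd: "ck = (cl, K)" by (cases ck)
  have v: "validCS (cl, K)" using validCS_all ck ckd by (auto simp: list_all_iff)
  define i where "i = last q"
  have lq: "length q \<le> length S" using q(2) by (metis length_take min.cobounded1 min_def)
  have "i \<in> set q" using q(1) by (simp add: i_def)
  then have "i \<in> set S" using q(2) by (metis in_set_takeD)
  then have i: "i \<in> {1..4}" using sS by auto
  have lcl: "length cl \<le> length q" and kk: "K \<le> 36 * sA q i cl" using lf ckd by (auto simp: leafCS_def i_def)
  have eq: "sA q i cl = sA S i cl" by (rule sA_take[OF q(2) lcl])
  have lcl11: "length cl \<le> 11" using lcl lq lS by simp
  have cs: "c_of cl \<in> costs 11"
    using c_of_costs[OF _ lcl11] v by (auto simp: validCS_def)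
  note CS1 = CS_c_of[OF v lcl11]
  have x: "(\<Sum>r\<in>alloc_bundle S i. c_of cl r) = real (sA S i cl)"
    using sum_alloc_c_of[of cl S i] lcl lq by simp
  have kk': "real K \<le> 36 * real (sA S i cl)" using kk eq by (metis of_nat_le_iff of_nat_mult of_nat_numeral)
  have "13/9 \<le> real (sA S i cl) / CS 4 11 (c_of cl)"
    using CS1 kk' by (simp add: le_divide_eq)
  then have "ereal (13/9) \<le> ereal ((\<Sum>r\<in>alloc_bundle S i. c_of cl r) / CS 4 11 (c_of cl))"
    using x by simp
  also have "\<dots> \<le> (SUP c\<in>costs 11. ereal ((\<Sum>r\<in>alloc_bundle S i. c r) / CS 4 11 c))"
    by (rule SUP_upper[OF cs])
  also have "\<dots> \<le> r_S 4 11 S"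
    unfolding r_S_def by (rule SUP_upper[OF i, where f = "\<lambda>i. SUP c\<in>costs 11. ereal ((\<Sum>r\<in>alloc_bundle S i. c r) / CS 4 11 c)"])
  finally show ?thesis .
qed

lemma rhoS_lb:
  assumes "S \<in> picking_orders 4 14"
  shows "ereal (10/7) \<le> rho_S 4 14 S"
proof -
  have lS: "length S = 14" and sS: "set S \<subseteq> {1..4}" using assms by (auto simp: picking_orders_def)
  obtain q ck where q: "q \<noteq> []" "take (length q) S = q" and ck: "ck \<in> set certsR" and lf: "leafR q ck"
    using chk_sound[OF chkR14, of S] lS sS by auto
  obtain cl Q B where ckd: "ck = (cl, Q, B)" by (cases ck)
  have v: "validR (cl, Q, B)" using validR_all ck ckd by (auto simp: list_all_iff)
  define i where "i = last q"
  have lq: "length q \<le> length S" using q(2) by (metis length_take min.cobounded1 min_def)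
  have "i \<in> set q" using q(1) by (simp add: i_def)
  then have "i \<in> set S" using q(2) by (metis in_set_takeD)
  then have i: "i \<in> {1..4}" using sS by auto
  have lcl: "length cl \<le> length q" and kk: "10 * B \<le> 7 * sA q i cl" using lf ckd by (auto simp: leafR_def i_def)
  have eq: "sA q i cl = sA S i cl" by (rule sA_take[OF q(2) lcl])
  have lcl14: "length cl \<le> 14" using lcl lq lS by simp
  have cs: "c_of cl \<in> costs 14"
    using c_of_costs[OF _ lcl14] v by (auto simp: validR_def)
  note M = MMS_c_of[OF v]
  have x: "(\<Sum>r\<in>alloc_bundle S i. c_of cl r) = real (sA S i cl)"
    using sum_alloc_c_of[of cl S i] lcl lq by simp
  have kk': "10 * real B \<le> 7 * real (sA S i cl)" using kk eq by (metis of_nat_le_iff of_nat_mult of_nat_numeral)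
  have "10/7 \<le> real (sA S i cl) / MMS 4 14 (c_of cl)"
    using M kk' by (simp add: le_divide_eq)
  then have "ereal (10/7) \<le> ereal ((\<Sum>r\<in>alloc_bundle S i. c_of cl r) / MMS 4 14 (c_of cl))"
    using x by simp
  also have "\<dots> \<le> (SUP c\<in>costs 14. ereal ((\<Sum>r\<in>alloc_bundle S i. c r) / MMS 4 14 c))"
    by (rule SUP_upper[OF cs])
  also have "\<dots> \<le> rho_S 4 14 S"
    unfolding rho_S_def by (rule SUP_upper[OF i, where f = "\<lambda>i. SUP c\<in>costs 14. ereal ((\<Sum>r\<in>alloc_bundle S i. c r) / MMS 4 14 c)"])
  finally show ?thesis .
qed

lemma r_nm_11: "ereal (13/9) \<le> r_nm 4 11"
  unfolding r_nm_def by (rule INF_greatest) (rule rS_lb)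

lemma rho_nm_14: "ereal (10/7) \<le> rho_nm 4 14"
  unfolding rho_nm_def by (rule INF_greatest) (rule rhoS_lb)

lemma r_hat_nm_11: "ereal (13/9) \<le> r_hat_nm 4 11"
proof -
  have "r_nm 4 11 \<le> r_hat_nm 4 11"
    unfolding r_nm_def r_hat_nm_def by (rule INF_superset_mono) (auto simp: ridge_orders_def)
  then show ?thesis using r_nm_11 by simp
qed

definition cnt :: "nat list \<Rightarrow> nat \<Rightarrow> nat \<Rightarrow> nat" where
  "cnt S i k = length (filter (\<lambda>x. x = i) (take k S))"

definition gn :: "nat \<Rightarrow> nat" where
  "gn k = (if 5 \<le> k then 2 else if k = 4 then 1 else 0)"

definition capn :: "nat \<Rightarrow> nat \<Rightarrow> nat \<Rightarrow> bool" where
  "capn i k x = (if i = 1 then 27 * x \<le> 4 * k + 23 else if i = 2 then 27 * x \<le> 6 * k + 15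
     else if i = 3 then 36 * x \<le> 13 * k else 27 * x \<le> 8 * k + 7 * gn k)"

definition P0 :: "nat list" where
  "P0 = [1, 2, 3, 4, 4, 3, 2, 1, 3, 4, 2, 3, 4, 3, 1, 4, 3, 2, 4, 3, 2, 4, 3, 1, 3, 4, 2, 3, 4, 2, 3, 4, 1, 3, 2, 3, 4, 2, 3, 4]"

lemma P0_ok: "length P0 = 40 \<and> list_all (\<lambda>k. list_all (\<lambda>i. capn i k (cnt P0 i k)) [1,2,3,4]) [1..<41]
  \<and> list_all (\<lambda>x. 1 \<le> x \<and> x \<le> 4) P0"
  by code_simp

lemma P0_nth: "P0!0 = 1 \<and> P0!1 = 2 \<and> P0!2 = 3 \<and> P0!3 = 4 \<and> P0!4 = 4 \<and> P0!5 = 3 \<and> P0!6 = 2 \<and> P0!7 = 1"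
  by (simp add: P0_def)

lemma abel:
  fixes w c :: "nat \<Rightarrow> real"
  assumes mono: "\<And>r s. 1 \<le> r \<Longrightarrow> r \<le> s \<Longrightarrow> s \<le> m \<Longrightarrow> c s \<le> c r"
    and nn: "\<And>r. 0 \<le> c r"
    and pre: "\<And>k. 1 \<le> k \<Longrightarrow> k \<le> m \<Longrightarrow> (\<Sum>r\<in>{1..k}. w r) \<le> 0"
  shows "(\<Sum>r\<in>{1..m}. w r * c r) \<le> 0"
proof -
  have claim: "1 \<le> k \<Longrightarrow> k \<le> m \<Longrightarrow> (\<Sum>r\<in>{1..k}. w r * c r) \<le> (\<Sum>r\<in>{1..k}. w r) * c k" for k
  proof (induction k)
    case 0
    then show ?case by simp
  next
    case (Suc k)
    show ?case
    proof (cases "k = 0")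
      case True
      then show ?thesis by simp
    next
      case False
      have IH: "(\<Sum>r\<in>{1..k}. w r * c r) \<le> (\<Sum>r\<in>{1..k}. w r) * c k" using Suc False by simp
      have W: "(\<Sum>r\<in>{1..k}. w r) \<le> 0" using pre[of k] Suc False by simp
      have cc: "c (Suc k) \<le> c k" using mono[of k "Suc k"] Suc False by simp
      have "(\<Sum>r\<in>{1..k}. w r) * c k \<le> (\<Sum>r\<in>{1..k}. w r) * c (Suc k)"
        using W cc by (simp add: mult_left_mono_neg)
      then have "(\<Sum>r\<in>{1..k}. w r * c r) + w (Suc k) * c (Suc k) \<le> ((\<Sum>r\<in>{1..k}. w r) + w (Suc k)) * c (Suc k)"
        using IH by (simp add: algebra_simps)
      then show ?thesis by (simp add: sum.cl_ivl_Suc)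
    qed
  qed
  show ?thesis
  proof (cases "m = 0")
    case True
    then show ?thesis by simp
  next
    case False
    then have "(\<Sum>r\<in>{1..m}. w r * c r) \<le> (\<Sum>r\<in>{1..m}. w r) * c m" using claim[of m] by simp
    also have "\<dots> \<le> 0" using pre[of m] nn[of m] False by (simp add: mult_nonpos_nonneg)
    finally show ?thesis .
  qed
qed

lemma cnt_sum:
  "k \<le> length S \<Longrightarrow> (\<Sum>r\<in>{1..k}. if S!(r-1) = i then 1 else 0 :: real) = real (cnt S i k)"
proof (induction k)
  case 0
  then show ?case by (simp add: cnt_def)
next
  case (Suc k)
  have "take (Suc k) S = take k S @ [S!k]" using Suc.prems by (simp add: take_Suc_conv_app_nth)
  then show ?case using Suc by (simp add: sum.cl_ivl_Suc cnt_def)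
qed

lemma delta_sum: "(\<Sum>r\<in>{1..m::nat}. (if r = j then 1 else 0) * (c r::real)) = (if j \<in> {1..m} then c j else 0)"
proof -
  have eq: "(\<lambda>r. (if r = j then 1 else 0) * c r) = (\<lambda>r. if r = j then c r else 0)" by auto
  show ?thesis unfolding eq by (rule sum.delta) simp
qed

lemma agent_bound:
  fixes a b d :: real
  assumes lS: "length S = m"
    and abd: "0 \<le> a" "0 \<le> b" "0 \<le> d" "a + b + d = 1"
    and cap: "\<And>k. 1 \<le> k \<Longrightarrow> k \<le> m \<Longrightarrow> real (cnt S i k) \<le> 13/9 * (a * real k / 4 + b + d * real (gn k))"
    and c: "c \<in> costs m"
  shows "(\<Sum>r\<in>alloc_bundle S i. c r) \<le> 13/9 * CS 4 m c"
proof -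
  have cnn: "0 \<le> c r" for r using c by (cases "r \<in> {1..m}") (auto simp: costs_def)
  have cmono: "c s \<le> c r" if "1 \<le> r" "r \<le> s" "s \<le> m" for r s using c that by (auto simp: costs_def)
  have czero: "c r = 0" if "r \<notin> {1..m}" for r using c that by (auto simp: costs_def)
  define ind where "ind (r::nat) = (if S!(r-1) = i then 1 else 0 :: real)" for r
  define e1 where "e1 (r::nat) = (if r = 1 then 1 else 0 :: real)" for r
  define e4 where "e4 (r::nat) = (if r = 4 then 1 else 0 :: real)" for r
  define e5 where "e5 (r::nat) = (if r = 5 then 1 else 0 :: real)" for r
  define w where "w (r::nat) = ind r - 13/9 * (a/4 + b * e1 r + d * e4 r + d * e5 r)" for r
  have pre: "(\<Sum>r\<in>{1..k}. w r) \<le> 0" if k: "1 \<le> k" "k \<le> m" for k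
  proof -
    have s1: "(\<Sum>r\<in>{1..k}. e1 r) = 1" using k by (simp add: e1_def)
    have s4: "(\<Sum>r\<in>{1..k}. e4 r) = (if 4 \<le> k then 1 else 0)" by (simp add: e4_def)
    have s5: "(\<Sum>r\<in>{1..k}. e5 r) = (if 5 \<le> k then 1 else 0)" by (simp add: e5_def)
    have g: "real (gn k) = (if 4 \<le> k then 1 else 0) + (if 5 \<le> k then 1 else 0)" by (simp add: gn_def)
    have si: "(\<Sum>r\<in>{1..k}. ind r) = real (cnt S i k)" using cnt_sum[of k S i] k lS by (simp add: ind_def)
    have "(\<Sum>r\<in>{1..k}. w r) = (\<Sum>r\<in>{1..k}. ind r) - 13/9 * (a/4 * real k + b * (\<Sum>r\<in>{1..k}. e1 r)
          + d * (\<Sum>r\<in>{1..k}. e4 r) + d * (\<Sum>r\<in>{1..k}. e5 r))"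
    proof -
      have A: "(\<Sum>r\<in>{1..k}. w r) = (\<Sum>r\<in>{1..k}. ind r) - 13/9 * (\<Sum>r\<in>{1..k}. a/4 + b * e1 r + d * e4 r + d * e5 r)"
        unfolding w_def by (simp only: sum_subtractf sum_distrib_left)
      have B: "(\<Sum>r\<in>{1..k}. a/4 + b * e1 r + d * e4 r + d * e5 r) = a/4 * real k + b * (\<Sum>r\<in>{1..k}. e1 r)
          + d * (\<Sum>r\<in>{1..k}. e4 r) + d * (\<Sum>r\<in>{1..k}. e5 r)"
        by (simp only: sum.distrib sum_distrib_left[symmetric]) simp
      show ?thesis unfolding A B ..
    qed
    also have "\<dots> = real (cnt S i k) - 13/9 * (a * real k / 4 + b + d * real (gn k))"
      unfolding si s1 s4 s5 g by (simp add: algebra_simps)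
    also have "\<dots> \<le> 0" using cap[OF k] by simp
    finally show ?thesis .
  qed
  have ab: "(\<Sum>r\<in>{1..m}. w r * c r) \<le> 0"
    by (rule abel[OF cmono cnn pre]) auto
  have t1: "(\<Sum>r\<in>{1..m}. e1 r * c r) = c 1" using czero[of 1] delta_sum[where m=m and j=1 and c=c] unfolding e1_def by auto
  have t4: "(\<Sum>r\<in>{1..m}. e4 r * c r) = c 4" using czero[of 4] delta_sum[where m=m and j=4 and c=c] unfolding e4_def by auto
  have t5: "(\<Sum>r\<in>{1..m}. e5 r * c r) = c 5" using czero[of 5] delta_sum[where m=m and j=5 and c=c] unfolding e5_def by auto
  have ti: "(\<Sum>r\<in>{1..m}. ind r * c r) = (\<Sum>r\<in>alloc_bundle S i. c r)"
  proof -
    have "(\<Sum>r\<in>{1..m}. ind r * c r) = (\<Sum>r\<in>{1..m}. if S!(r-1) = i then c r else 0)"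
      by (rule sum.cong) (auto simp: ind_def)
    also have "\<dots> = (\<Sum>r\<in>alloc_bundle S i. c r)"
      unfolding alloc_bundle_def pick_def lS by (rule sum.inter_filter[symmetric]) simp
    finally show ?thesis .
  qed
  have "(\<Sum>r\<in>{1..m}. w r * c r) = (\<Sum>r\<in>{1..m}. ind r * c r) - 13/9 * (a/4 * (\<Sum>r\<in>{1..m}. c r)
        + b * (\<Sum>r\<in>{1..m}. e1 r * c r) + d * (\<Sum>r\<in>{1..m}. e4 r * c r) + d * (\<Sum>r\<in>{1..m}. e5 r * c r))"
  proof -
    have A: "(\<Sum>r\<in>{1..m}. w r * c r) = (\<Sum>r\<in>{1..m}. ind r * c r) - 13/9 * (\<Sum>r\<in>{1..m}. a/4 * c r + b * (e1 r * c r) + d * (e4 r * c r) + d * (e5 r * c r))"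
      unfolding w_def by (simp only: left_diff_distrib sum_subtractf sum_distrib_left[symmetric] distrib_right mult.assoc)
    have B: "(\<Sum>r\<in>{1..m}. a/4 * c r + b * (e1 r * c r) + d * (e4 r * c r) + d * (e5 r * c r)) = a/4 * (\<Sum>r\<in>{1..m}. c r)
        + b * (\<Sum>r\<in>{1..m}. e1 r * c r) + d * (\<Sum>r\<in>{1..m}. e4 r * c r) + d * (\<Sum>r\<in>{1..m}. e5 r * c r)"
      by (simp only: sum.distrib sum_distrib_left[symmetric])
    show ?thesis unfolding A B ..
  qed
  also have "\<dots> = (\<Sum>r\<in>alloc_bundle S i. c r) - 13/9 * (a/4 * (\<Sum>r\<in>{1..m}. c r) + b * c 1 + d * (c 4 + c 5))"
    unfolding t1 t4 t5 ti by (simp add: algebra_simps)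
  finally have main: "(\<Sum>r\<in>alloc_bundle S i. c r) \<le> 13/9 * (a * ((\<Sum>r\<in>{1..m}. c r) / 4) + b * c 1 + d * (c 4 + c 5))"
    using ab by simp
  have CS1: "(\<Sum>r\<in>{1..m}. c r) / 4 \<le> CS 4 m c" "c 1 \<le> CS 4 m c" "c 4 + c 5 \<le> CS 4 m c"
    unfolding CS_def by auto
  have "a * ((\<Sum>r\<in>{1..m}. c r) / 4) + b * c 1 + d * (c 4 + c 5) \<le> a * CS 4 m c + b * CS 4 m c + d * CS 4 m c"
    using CS1 abd by (intro add_mono mult_left_mono) auto
  also have "\<dots> = CS 4 m c" using abd(4) by (simp add: algebra_simps flip: distrib_right)
  finally show ?thesis using main by simp
qed

lemma cnt_append_le: "k \<le> length S \<Longrightarrow> cnt (S@[j]) i k = cnt S i k"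
  by (simp add: cnt_def)

lemma cnt_append_last: "cnt (S@[j]) i (Suc (length S)) = cnt S i (length S) + (if j = i then 1 else 0)"
  by (simp add: cnt_def)

lemma cnt_take: "k \<le> m \<Longrightarrow> cnt (take m S) i k = cnt S i k"
  by (simp add: cnt_def min_absorb1)

lemma sum_cnt4: "set xs \<subseteq> {1..4} \<Longrightarrow>
  length (filter (\<lambda>x. x = 1) xs) + length (filter (\<lambda>x. x = 2) xs) + length (filter (\<lambda>x. x = 3) xs)
  + length (filter (\<lambda>x. x = 4) xs) = length (xs::nat list)"
proof (induction xs)
  case Nil
  then show ?case by simp
next
  case (Cons x xs)
  then have "x = 1 \<or> x = 2 \<or> x = 3 \<or> x = 4" by auto
  then show ?case using Cons by auto
qed

lemma capn_mono: "capn i k x \<Longrightarrow> capn i (Suc k) x"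
  by (auto simp: capn_def gn_def split: if_splits)

definition la :: "nat \<Rightarrow> real" where
  "la i = (if i = 1 then 16/39 else if i = 2 then 24/39 else if i = 3 then 1 else 32/39)"
definition lb :: "nat \<Rightarrow> real" where
  "lb i = (if i = 1 then 23/39 else if i = 2 then 15/39 else 0)"
definition ld :: "nat \<Rightarrow> real" where
  "ld i = (if i = 1 then 0 else if i = 2 then 0 else if i = 3 then 0 else 7/39)"

lemma lam_ok: "0 \<le> la i" "0 \<le> lb i" "0 \<le> ld i" "la i + lb i + ld i = 1"
  by (auto simp: la_def lb_def ld_def)

lemma capn_real:
  assumes "capn i k x"
  shows "real x \<le> 13/9 * (la i * real k / 4 + lb i + ld i * real (gn k))"
proof -
  consider "i = 1" | "i = 2" | "i = 3" | "i \<noteq> 1" "i \<noteq> 2" "i \<noteq> 3" by blast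
  then show ?thesis
  proof cases
    case 1
    then have "27 * x \<le> 4 * k + 23" using assms by (simp add: capn_def)
    then have "real (27 * x) \<le> real (4 * k + 23)" by (simp only: of_nat_le_iff)
    then show ?thesis using 1 by (simp add: la_def lb_def ld_def)
  next
    case 2
    then have "27 * x \<le> 6 * k + 15" using assms by (simp add: capn_def)
    then have "real (27 * x) \<le> real (6 * k + 15)" by (simp only: of_nat_le_iff)
    then show ?thesis using 2 by (simp add: la_def lb_def ld_def)
  next
    case 3
    then have "36 * x \<le> 13 * k" using assms by (simp add: capn_def)
    then have "real (36 * x) \<le> real (13 * k)" by (simp only: of_nat_le_iff)
    then show ?thesis using 3 by (simp add: la_def lb_def ld_def)
  next
    case 4
    then have "27 * x \<le> 8 * k + 7 * gn k" using assms by (simp add: capn_def)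
    then have "real (27 * x) \<le> real (8 * k + 7 * gn k)" by (simp only: of_nat_le_iff)
    then show ?thesis using 4 by (simp add: la_def lb_def ld_def)
  qed
qed

definition goodS :: "nat \<Rightarrow> nat list \<Rightarrow> bool" where
  "goodS m S = (length S = m \<and> set S \<subseteq> {1..4} \<and> (\<forall>r<min m 40. S!r = P0!r)
     \<and> (\<forall>i\<in>{1..4}. \<forall>k\<in>{1..m}. capn i k (cnt S i k)))"

lemma goodS_base: "m \<le> 40 \<Longrightarrow> goodS m (take m P0)"
proof -
  assume m: "m \<le> 40"
  have P: "length P0 = 40" "list_all (\<lambda>k. list_all (\<lambda>i. capn i k (cnt P0 i k)) [1,2,3,4]) [1..<41]"
    "list_all (\<lambda>x. 1 \<le> x \<and> x \<le> 4) P0" using P0_ok by auto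
  have caps: "capn i k (cnt P0 i k)" if "i \<in> {1..4}" "k \<in> {1..40}" for i k
  proof -
    have "k \<in> set [1..<41]" using that by auto
    then have "list_all (\<lambda>i. capn i k (cnt P0 i k)) [1,2,3,4]" using P(2) by (simp add: list_all_iff)
    moreover have "i = 1 \<or> i = 2 \<or> i = 3 \<or> i = 4" using that by auto
    ultimately show ?thesis by auto
  qed
  have "set (take m P0) \<subseteq> {1..4}" using P(3) by (auto simp: list_all_iff dest: in_set_takeD)
  then show ?thesis unfolding goodS_def using m P(1) caps by (auto simp: cnt_take)
qed

lemma goodS_step:
  assumes "goodS m S" "40 \<le> m"
  shows "\<exists>S'. goodS (Suc m) S'"
proof -
  have lS: "length S = m" and sS: "set S \<subseteq> {1..4}" and pr: "\<forall>r<min m 40. S!r = P0!r"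
    and cp: "\<forall>i\<in>{1..4}. \<forall>k\<in>{1..m}. capn i k (cnt S i k)" using assms(1) by (auto simp: goodS_def)
  have sum4: "cnt S 1 m + cnt S 2 m + cnt S 3 m + cnt S 4 m = m"
    using sum_cnt4[OF sS] lS by (simp add: cnt_def)
  have "\<exists>j\<in>{1..4}. capn j (Suc m) (cnt S j m + 1)"
  proof (rule ccontr)
    assume "\<not> ?thesis"
    then have "\<not> capn 1 (Suc m) (cnt S 1 m + 1)" "\<not> capn 2 (Suc m) (cnt S 2 m + 1)"
      "\<not> capn 3 (Suc m) (cnt S 3 m + 1)" "\<not> capn 4 (Suc m) (cnt S 4 m + 1)" by auto
    then show False using sum4 assms(2) by (simp add: capn_def gn_def)
  qed
  then obtain j where j: "j \<in> {1..4}" "capn j (Suc m) (cnt S j m + 1)" by blast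
  have "goodS (Suc m) (S@[j])"
    unfolding goodS_def
  proof (intro conjI ballI allI impI)
    show "length (S@[j]) = Suc m" using lS by simp
    show "set (S@[j]) \<subseteq> {1..4}" using sS j by auto
  next
    fix r assume "r < min (Suc m) 40"
    then show "(S@[j])!r = P0!r" using pr lS assms(2) by (auto simp: nth_append)
  next
    fix i k :: nat assume i: "i \<in> {1..4}" and k: "k \<in> {1..Suc m}"
    show "capn i k (cnt (S@[j]) i k)"
    proof (cases "k = Suc m")
      case True
      have "cnt (S@[j]) i k = cnt S i m + (if j = i then 1 else 0)"
        using cnt_append_last[of S j i] lS True by simp
      moreover have "capn i m (cnt S i m)" using cp i assms(2) by auto
      ultimately show ?thesis using j True capn_mono by auto
    next
      case False
      then have "k \<in> {1..m}" using k by auto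
      then show ?thesis using cp i cnt_append_le[of k S j i] lS by auto
    qed
  qed
  then show ?thesis by blast
qed

lemma goodS_ex: "\<exists>S. goodS m S"
proof (cases "m \<le> 40")
  case True
  then show ?thesis using goodS_base by blast
next
  case False
  have "\<exists>S. goodS (40 + n) S" for n
  proof (induction n)
    case 0
    then show ?case using goodS_base[of 40] by auto
  next
    case (Suc n)
    then obtain S where "goodS (40 + n) S" by blast
    then show ?case using goodS_step[of "40 + n" S] by auto
  qed
  then show ?thesis using False by (metis le_add_diff_inverse less_or_eq_imp_le not_le)
qed

lemma rS_ub:
  assumes "goodS m S"
  shows "r_S 4 m S \<le> ereal (13/9)"
proof -
  have lS: "length S = m" and cp: "\<forall>i\<in>{1..4}. \<forall>k\<in>{1..m}. capn i k (cnt S i k)"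
    using assms by (auto simp: goodS_def)
  show ?thesis
    unfolding r_S_def
  proof (intro SUP_least)
    fix i :: nat and c assume i: "i \<in> {1..4}" and c: "c \<in> costs m"
    have "(\<Sum>r\<in>alloc_bundle S i. c r) \<le> 13/9 * CS 4 m c"
      by (rule agent_bound[OF lS lam_ok[of i] _ c]) (use cp i capn_real in auto)
    moreover have "0 \<le> CS 4 m c"
    proof -
      have "0 \<le> c 1" using c by (cases "1 \<in> {1..m}") (auto simp: costs_def)
      then show ?thesis unfolding CS_def by auto
    qed
    ultimately have "(\<Sum>r\<in>alloc_bundle S i. c r) / CS 4 m c \<le> 13/9"
      by (cases "CS 4 m c = 0") (auto simp: divide_le_eq)
    then show "ereal ((\<Sum>r\<in>alloc_bundle S i. c r) / CS 4 m c) \<le> ereal (13/9)" by simp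
  qed
qed

lemma goodS_po: "goodS m S \<Longrightarrow> S \<in> picking_orders 4 m"
  by (auto simp: goodS_def picking_orders_def)

lemma goodS_ridge: "goodS m S \<Longrightarrow> 8 \<le> m \<Longrightarrow> S \<in> ridge_orders 4 m"
proof -
  assume g: "goodS m S" and m: "8 \<le> m"
  have pr: "\<forall>r<8. S!r = P0!r" using g m by (auto simp: goodS_def)
  have "pick S r = r \<and> pick S (4 + r) = 4 - r + 1" if "r \<in> {1..4}" for r
  proof -
    have "r = 1 \<or> r = 2 \<or> r = 3 \<or> r = 4" using that by auto
    then show ?thesis using pr P0_nth by (auto simp: pick_def)
  qed
  then show ?thesis using goodS_po[OF g] by (auto simp: ridge_orders_def)
qed

theorem proposition3:
  shows "r_hat_n 4 = ereal (13/9) \<and> r_n 4 = ereal (13/9) \<and> rho_n 4 \<ge> ereal (10/7)"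
proof (intro conjI)
  have ub: "r_nm 4 m \<le> ereal (13/9)" for m
  proof -
    obtain S where S: "goodS m S" using goodS_ex by blast
    have "r_nm 4 m \<le> r_S 4 m S" unfolding r_nm_def by (rule INF_lower) (rule goodS_po[OF S])
    also have "\<dots> \<le> ereal (13/9)" by (rule rS_ub[OF S])
    finally show ?thesis .
  qed
  have ubh: "r_hat_nm 4 m \<le> ereal (13/9)" if m: "8 \<le> m" for m
  proof -
    obtain S where S: "goodS m S" using goodS_ex by blast
    have "r_hat_nm 4 m \<le> r_S 4 m S" unfolding r_hat_nm_def by (rule INF_lower) (rule goodS_ridge[OF S m])
    also have "\<dots> \<le> ereal (13/9)" by (rule rS_ub[OF S])
    finally show ?thesis .
  qed
  show "r_hat_n 4 = ereal (13/9)"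
  proof (rule antisym)
    show "r_hat_n 4 \<le> ereal (13/9)" unfolding r_hat_n_def by (rule SUP_least) (use ubh in auto)
    have "r_hat_nm 4 11 \<le> r_hat_n 4" unfolding r_hat_n_def by (rule SUP_upper) auto
    then show "ereal (13/9) \<le> r_hat_n 4" using r_hat_nm_11 by simp
  qed
  show "r_n 4 = ereal (13/9)"
  proof (rule antisym)
    show "r_n 4 \<le> ereal (13/9)" unfolding r_n_def by (rule SUP_least) (use ub in auto)
    have "r_nm 4 11 \<le> r_n 4" unfolding r_n_def by (rule SUP_upper) auto
    then show "ereal (13/9) \<le> r_n 4" using r_nm_11 by simp
  qed
  have "rho_nm 4 14 \<le> rho_n 4" unfolding rho_n_def by (rule SUP_upper) auto
  then show "rho_n 4 \<ge> ereal (10/7)" using rho_nm_14 by simp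
qed

end
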